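(* Let $X$ be a polyhedron, let $F=\{A_1,\dots,A_m\}$ be a polyhedral cover of $X$, let $N=N(F)$ be its nerve, and let $k\ge 0$ be an integer. Suppose that for every simplex $\sigma\in N^{(k)}$, $$\tilde H_{k-|\sigma|+1}\Big(\bigcap_{i\in\sigma}A_i\Big)=0 .$$ Then 1. $\operatorname{Rank}\tilde H_{k+1}(N)\le \operatorname{Rank}\tilde H_{k+1}(X)$, and 2. $\operatorname{Rank}\tilde H_{k}(X)\le \operatorname{Rank}\tilde H_{k}(N)$.
   Context: All homology is reduced homology $\tilde H_*$ with coefficients in a fixed field, and $\operatorname{Rank}$ denotes dimension over that field. By convention, $\tilde H_{-1}(A)=0$ means that $A$ is nonempty. A polyhedral cover of a polyhedron $X$ is a finite family $F=\{A_1,\dots,A_m\}$ of subpolyhedra of $X$ with $\bigcup_{i=1}^m A_i=X$. The nerve $N(F)$ is the simplicial complex on vertex set $\{1,\dots,m\}$ whose simplices are the nonempty sets $\sigma\subset\{1,\dots,m\}$ with $\bigcap_{i\in\sigma}A_i\neq\emptyset$. $N^{(k)}$ denotes the $k$-skeleton of $N$, i.e. the simplices $\sigma$ with $|\sigma|\le k+1$, where $|\sigma|$ is the number of vertices of $\sigma$. *)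

theory Defs
  imports Complex_Main "HOL-Library.Function_Algebras"
begin

text \<open>The empty face plays the role of the
  (-1)-dimensional simplex, so the chain complex below is the augmented one
  and its homology is reduced homology. The empty space is the complex
  with only the empty face, whose reduced homology in degree -1 is the field.\<close>

definition simplicial_complex :: "'v set set \<Rightarrow> bool" where
  "simplicial_complex K \<longleftrightarrow> finite K \<and> {} \<in> K \<and> (\<forall>\<sigma>\<in>K. finite \<sigma>)
     \<and> (\<forall>\<sigma>\<in>K. \<forall>\<tau>. \<tau> \<subseteq> \<sigma> \<longrightarrow> \<tau> \<in> K)"

definition subcomplex :: "'v set set \<Rightarrow> 'v set set \<Rightarrow> bool" where
  "subcomplex L K \<longleftrightarrow> simplicial_complex L \<and> L \<subseteq> K"

definition chain_scale :: "'k::field \<Rightarrow> ('v set \<Rightarrow> 'k) \<Rightarrow> ('v set \<Rightarrow> 'k)" where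
  "chain_scale a c = (\<lambda>\<sigma>. a * c \<sigma>)"

lemma vector_space_chain_scale: "vector_space chain_scale"
  unfolding vector_space_def chain_scale_def by (auto simp: fun_eq_iff algebra_simps)

definition chains :: "'v set set \<Rightarrow> int \<Rightarrow> ('v set \<Rightarrow> 'k::field) set" where
  "chains K q = {c. \<forall>\<sigma>. c \<sigma> \<noteq> 0 \<longrightarrow> \<sigma> \<in> K \<and> int (card \<sigma>) = q + 1}"

text \<open>Simplicial boundary, orientation given by the linear order on vertices:
  the coefficient of face \<tau> in the boundary of \<tau> \<union> {v} is (-1)^(position of v).\<close>
definition boundary :: "('v::linorder) set set \<Rightarrow> ('v set \<Rightarrow> 'k::field) \<Rightarrow> ('v set \<Rightarrow> 'k)" where
  "boundary K c = (\<lambda>\<tau>. \<Sum>v \<in> (\<Union>K) - \<tau>. (-1) ^ card {u\<in>\<tau>. u < v} * c (insert v \<tau>))"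

definition cycles :: "('v::linorder) set set \<Rightarrow> int \<Rightarrow> ('v set \<Rightarrow> 'k::field) set" where
  "cycles K q = {c \<in> chains K q. boundary K c = (\<lambda>_. 0)}"

definition bounding :: "('v::linorder) set set \<Rightarrow> int \<Rightarrow> ('v set \<Rightarrow> 'k::field) set" where
  "bounding K q = boundary K ` chains K (q + 1)"

definition reduced_betti :: "'k::field itself \<Rightarrow> ('v::linorder) set set \<Rightarrow> int \<Rightarrow> nat" where
  "reduced_betti TYPE('k) K q =
     vector_space.dim (chain_scale :: 'k \<Rightarrow> _) (cycles K q :: ('v set \<Rightarrow> 'k) set)
   - vector_space.dim (chain_scale :: 'k \<Rightarrow> _) (bounding K q :: ('v set \<Rightarrow> 'k) set)"

definition inter_family :: "(nat \<Rightarrow> 'v set set) \<Rightarrow> nat set \<Rightarrow> 'v set set" where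
  "inter_family A \<sigma> = (\<Inter>i\<in>\<sigma>. A i)"

text \<open>Nerve of the cover A_0,...,A_{m-1} (augmented: contains the empty face).
  A nonempty \<sigma> is a simplex iff the intersection is a nonempty space,
  i.e. contains a nonempty face.\<close>
definition nerve :: "nat \<Rightarrow> (nat \<Rightarrow> 'v set set) \<Rightarrow> nat set set" where
  "nerve m A = {\<sigma>. \<sigma> \<subseteq> {0..<m} \<and> (\<sigma> = {} \<or> (\<exists>f \<in> inter_family A \<sigma>. f \<noteq> {}))}"

end

theory Submission
  imports Defs
begin

definition fdim_in :: "('a::field \<Rightarrow> 'b::ab_group_add \<Rightarrow> 'b) \<Rightarrow> 'b set \<Rightarrow> bool" where
  "fdim_in s V \<longleftrightarrow> (\<exists>F. finite F \<and> V \<subseteq> module.span s F)"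

context vector_space
begin


lemma fin_subset: "fdim_in scale W \<Longrightarrow> V \<subseteq> span W \<Longrightarrow> fdim_in scale V"
proof -
  assume a: "fdim_in scale W" "V \<subseteq> span W"
  then obtain F where F: "finite F" "W \<subseteq> span F" unfolding fdim_in_def by auto
  have "span W \<subseteq> span F" using F(2) by (rule span_minimal) simp
  then show ?thesis unfolding fdim_in_def using F(1) a(2) by blast
qed

lemma fin_mono: "fdim_in scale W \<Longrightarrow> V \<subseteq> W \<Longrightarrow> fdim_in scale V"
  by (rule fin_subset) (auto intro: span_base)

lemma fin_basis:
  assumes "fdim_in scale V"
  obtains B where "B \<subseteq> V" "independent B" "V \<subseteq> span B" "card B = dim V" "finite B"
proof -
  obtain F where F: "finite F" "V \<subseteq> span F" using assms unfolding fdim_in_def by auto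
  obtain B where B: "B \<subseteq> V" "independent B" "V \<subseteq> span B" "card B = dim V"
    using basis_exists by blast
  have "finite B" using independent_span_bound[OF F(1) B(2)] B(1) F(2) by auto
  then show ?thesis using B that by auto
qed

lemma dim_mono_fin:
  assumes "V \<subseteq> span W" "fdim_in scale W"
  shows "dim V \<le> dim W"
proof -
  obtain B where B: "B \<subseteq> W" "independent B" "W \<subseteq> span B" "card B = dim W" "finite B"
    using fin_basis[OF assms(2)] by blast
  have "span W \<subseteq> span B" using B(3) by (rule span_minimal) simp
  then have "V \<subseteq> span B" using assms(1) by blast
  then show ?thesis using dim_le_card[OF _ B(5)] B(4) by auto
qed

lemma span_disjoint:
  assumes "finite A" "independent (A \<union> B)" "A \<inter> B = {}"
  shows "span A \<inter> span B = {0}"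
  using assms
proof (induction A rule: finite_induct)
  case empty
  then show ?case by (auto simp: span_zero)
next
  case (insert a A)
  show ?case
  proof (intro equalityI subsetI)
    fix x assume x: "x \<in> span (insert a A) \<inter> span B"
    then obtain c where c: "x - c *s a \<in> span A" using span_breakdown_eq by blast
    have IH: "span A \<inter> span B = {0}"
      using insert.IH insert.prems independent_mono[of "insert a A \<union> B" "A \<union> B"] by auto
    show "x \<in> {0}"
    proof (cases "c = 0")
      case True
      then show ?thesis using c x IH by auto
    next
      case False
      have "c *s a = x - (x - c *s a)" by simp
      have xin: "x \<in> span (A \<union> B)" using x span_mono[of B "A \<union> B"] by auto
      have "x - c *s a \<in> span (A \<union> B)" using c span_mono[of A "A \<union> B"] by auto
      then have "c *s a \<in> span (A \<union> B)"
        using xin span_diff by (metis \<open>c *s a = x - (x - c *s a)\<close>)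
      then have "(inverse c) *s (c *s a) \<in> span (A \<union> B)" by (rule span_scale)
      then have "a \<in> span (A \<union> B)" using False by simp
      moreover have "a \<notin> A \<union> B" using insert.hyps insert.prems by auto
      moreover have "A \<union> B = (insert a A \<union> B) - {a}" using calculation(2) by auto
      ultimately have "dependent (insert a A \<union> B)"
        unfolding dependent_def by (metis UnI1 insertI1)
      then show ?thesis using insert.prems by auto
    qed
  next
    fix x :: 'b assume "x \<in> {0}" then show "x \<in> span (insert a A) \<inter> span B" by (auto simp: span_zero)
  qed
qed

lemma independent_Un_disjoint_span:
  assumes "independent A" "independent B" "span A \<inter> span B = {0}"
  shows "independent (A \<union> B)" "A \<inter> B = {}"
proof -
  show AB: "A \<inter> B = {}"
  proof (rule ccontr)
    assume "A \<inter> B \<noteq> {}"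
    then obtain a where "a \<in> A" "a \<in> B" by auto
    then have "a = 0" using assms(3) span_base by blast
    then show False using \<open>a \<in> A\<close> assms(1) dependent_zero by blast
  qed
  show "independent (A \<union> B)"
  proof
    assume "dependent (A \<union> B)"
    then obtain a where a: "a \<in> A \<union> B" "a \<in> span (A \<union> B - {a})" unfolding dependent_def by blast
    show False
    proof (cases "a \<in> A")
      case True
      then have "a \<notin> B" using AB by auto
      then have "A \<union> B - {a} = (A - {a}) \<union> B" by auto
      with a have "a \<in> span ((A - {a}) \<union> B)" by simp
      then obtain x y where xy: "a = x + y" "x \<in> span (A - {a})" "y \<in> span B"
        unfolding span_Un by blast
      have "y = a - x" using xy by simp
      moreover have "a - x \<in> span A"
        using xy(2) span_mono[of "A - {a}" A] True span_base span_diff by blast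
      ultimately have "y \<in> span A \<inter> span B" using xy(3) by simp
      then have "y = 0" using assms(3) by blast
      then have "a \<in> span (A - {a})" using xy by simp
      then show False using assms(1) True dependent_def by blast
    next
      case False
      then have aB: "a \<in> B" using a by auto
      then have "A \<union> B - {a} = A \<union> (B - {a})" using False by auto
      with a have "a \<in> span (A \<union> (B - {a}))" by simp
      then obtain x y where xy: "a = x + y" "x \<in> span A" "y \<in> span (B - {a})"
        unfolding span_Un by blast
      have "x = a - y" using xy by simp
      moreover have "a - y \<in> span B"
        using xy(3) span_mono[of "B - {a}" B] aB span_base span_diff by blast
      ultimately have "x \<in> span A \<inter> span B" using xy(2) by simp
      then have "x = 0" using assms(3) by blast
      then have "a \<in> span (B - {a})" using xy by simp
      then show False using assms(2) aB dependent_def by blast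
    qed
  qed
qed

lemma card_indep_le_dim:
  assumes "B \<subseteq> V" "independent B" "fdim_in scale V"
  shows "finite B" "card B \<le> dim V"
proof -
  obtain C where C: "B \<subseteq> C" "C \<subseteq> V" "independent C" "V \<subseteq> span C"
    using maximal_independent_subset_extend[OF assms(1,2)] by blast
  obtain F where F: "finite F" "V \<subseteq> span F" using assms(3) unfolding fdim_in_def by auto
  have fC: "finite C" using independent_span_bound[OF F(1) C(3)] C(2) F(2) by auto
  then show "finite B" using C(1) finite_subset by auto
  have "card C = dim V" using basis_card_eq_dim[OF C(2) C(4) C(3)] .
  then show "card B \<le> dim V" using card_mono[OF fC C(1)] by simp
qed

lemma dim_sum_le:
  assumes "subspace U" "subspace B" "fdim_in scale U" "fdim_in scale B"
  shows "dim {x + y | x y. x \<in> U \<and> y \<in> B} + dim (U \<inter> B) \<le> dim U + dim B"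
proof -
  have fUB: "fdim_in scale (U \<inter> B)" by (rule fin_mono[OF assms(3)]) blast
  obtain b0 where b0: "b0 \<subseteq> U \<inter> B" "independent b0" "U \<inter> B \<subseteq> span b0" "card b0 = dim (U \<inter> B)" "finite b0"
    using fin_basis[OF fUB] by blast
  obtain e where e: "b0 \<subseteq> e" "e \<subseteq> U" "independent e" "U \<subseteq> span e"
    using maximal_independent_subset_extend[of b0 U] b0 by blast
  have fe: "finite e" "card e = dim U"
    using card_indep_le_dim[OF e(2) e(3) assms(3)] basis_card_eq_dim[OF e(2) e(4) e(3)] by auto
  obtain g where g: "g \<subseteq> B" "independent g" "B \<subseteq> span g" "card g = dim B" "finite g"
    using fin_basis[OF assms(4)] by blast
  have "{x + y | x y. x \<in> U \<and> y \<in> B} \<subseteq> span ((e - b0) \<union> g)"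
  proof
    fix z assume "z \<in> {x + y | x y. x \<in> U \<and> y \<in> B}"
    then obtain x y where z: "z = x + y" "x \<in> U" "y \<in> B" by auto
    have be: "b0 \<union> (e - b0) = e" using e(1) by blast
    have "x \<in> span e" using e(4) z(2) by blast
    then have "x \<in> span (b0 \<union> (e - b0))" using be by simp
    then obtain x1 x2 where x12: "x = x1 + x2" "x1 \<in> span b0" "x2 \<in> span (e - b0)"
      unfolding span_Un by auto
    have "x1 \<in> B" using x12(2) b0(1) span_minimal[of b0 B] assms(2) by auto
    have "x1 + y \<in> span g" using \<open>x1 \<in> B\<close> z(3) g(3) assms(2) subspace_add by blast
    then have "x2 + (x1 + y) \<in> span ((e - b0) \<union> g)" unfolding span_Un using x12 by auto
    then show "z \<in> span ((e - b0) \<union> g)" using z x12 by (simp add: algebra_simps)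
  qed
  moreover have "finite ((e - b0) \<union> g)" using fe(1) g(5) by simp
  ultimately have "dim {x + y | x y. x \<in> U \<and> y \<in> B} \<le> card ((e - b0) \<union> g)"
    by (rule dim_le_card)
  also have "\<dots> \<le> card (e - b0) + card g" by (rule card_Un_le)
  also have "card (e - b0) = card e - card b0" using e(1) b0(5) by (simp add: card_Diff_subset)
  finally show ?thesis using fe b0 g card_mono[OF fe(1) e(1)] by linarith
qed

lemma dim_sum_ge:
  assumes "subspace U" "subspace B" "fdim_in scale Z" "U \<subseteq> Z" "B \<subseteq> Z"
  shows "dim U + dim B \<le> dim Z + dim (U \<inter> B)"
proof -
  have fU: "fdim_in scale U" by (rule fin_mono[OF assms(3) assms(4)])
  have fB: "fdim_in scale B" by (rule fin_mono[OF assms(3) assms(5)])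
  have fUB: "fdim_in scale (U \<inter> B)" by (rule fin_mono[OF fU]) blast
  obtain b0 where b0: "b0 \<subseteq> U \<inter> B" "independent b0" "U \<inter> B \<subseteq> span b0" "card b0 = dim (U \<inter> B)" "finite b0"
    using fin_basis[OF fUB] by blast
  obtain e where e: "b0 \<subseteq> e" "e \<subseteq> U" "independent e" "U \<subseteq> span e"
    using maximal_independent_subset_extend[of b0 U] b0 by blast
  have fe: "finite e" "card e = dim U"
    using card_indep_le_dim[OF e(2) e(3) fU] basis_card_eq_dim[OF e(2) e(4) e(3)] by auto
  obtain g where g: "g \<subseteq> B" "independent g" "B \<subseteq> span g" "card g = dim B" "finite g"
    using fin_basis[OF fB] by blast
  have ie: "independent (e - b0)" using e(3) independent_mono by blast
  have sd: "span (e - b0) \<inter> span b0 = {0}"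
  proof -
    have "(e - b0) \<union> b0 = e" using e(1) by blast
    then show ?thesis using span_disjoint[of "e - b0" b0] e(3) fe(1) by auto
  qed
  have "span (e - b0) \<inter> span g = {0}"
  proof (intro equalityI subsetI)
    fix x assume x: "x \<in> span (e - b0) \<inter> span g"
    have "x \<in> U" using x e(2) span_mono[of "e - b0" U] assms(1) span_minimal by blast
    moreover have "x \<in> B" using x g(1) assms(2) span_minimal by blast
    ultimately have "x \<in> span b0" using b0(3) by auto
    then show "x \<in> {0}" using sd x by auto
  qed (auto simp: span_zero)
  then have iu: "independent ((e - b0) \<union> g)" "(e - b0) \<inter> g = {}"
    using independent_Un_disjoint_span[OF ie g(2)] by auto
  have "(e - b0) \<union> g \<subseteq> Z" using e(2) g(1) assms by auto
  then have "card ((e - b0) \<union> g) \<le> dim Z" using card_indep_le_dim[OF _ iu(1) assms(3)] by auto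
  moreover have "card ((e - b0) \<union> g) = card (e - b0) + card g"
    using iu(2) fe(1) g(5) by (simp add: card_Un_disjoint)
  moreover have "card (e - b0) = card e - card b0" using e(1) b0(5) by (simp add: card_Diff_subset)
  ultimately show ?thesis using fe b0 g card_mono[OF fe(1) e(1)] by linarith
qed

lemma rank_nullity_fin:
  assumes lin: "Vector_Spaces.linear scale scale f" and S: "subspace S" "fdim_in scale S"
  shows "dim S = dim {x \<in> S. f x = 0} + dim (f ` S)"
proof -
  interpret lf: Vector_Spaces.linear scale scale f by fact
  let ?K = "{x \<in> S. f x = 0}"
  have Ksub: "subspace ?K"
    using S(1) unfolding subspace_def by (auto simp: lf.add lf.scale)
  have fK: "fdim_in scale ?K" by (rule fin_mono[OF S(2)]) blast
  obtain b where b: "b \<subseteq> ?K" "independent b" "?K \<subseteq> span b" "card b = dim ?K" "finite b"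
    using fin_basis[OF fK] by blast
  obtain C where C: "b \<subseteq> C" "C \<subseteq> S" "independent C" "S \<subseteq> span C"
    using maximal_independent_subset_extend[of b S] b by blast
  have fC: "finite C" "card C = dim S"
    using card_indep_le_dim[OF C(2) C(3) S(2)] basis_card_eq_dim[OF C(2) C(4) C(3)] by auto
  let ?D = "C - b"
  have iD: "independent ?D" using C(3) independent_mono by blast
  have sd: "span ?D \<inter> span b = {0}"
  proof -
    have "?D \<union> b = C" using C(1) by blast
    then show ?thesis using span_disjoint[of "?D" b] C(3) fC(1) by auto
  qed
  have spanbK: "span b \<subseteq> ?K" using b(1) Ksub span_minimal by blast
  have inj: "inj_on f (span ?D)"
  proof (rule lf.inj_on_iff_eq_0[THEN iffD2])
    show "subspace (span ?D)" by simp
    show "\<forall>x\<in>span ?D. f x = 0 \<longrightarrow> x = 0"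
    proof (intro ballI impI)
      fix x assume x: "x \<in> span ?D" "f x = 0"
      have "x \<in> S" using x(1) C(2) S(1) span_minimal[of ?D S] by auto
      then have "x \<in> span b" using x b(3) by auto
      then show "x = 0" using sd x by auto
    qed
  qed
  have ifD: "independent (f ` ?D)" using lf.independent_injective_image[OF iD inj] .
  have cardfD: "card (f ` ?D) = card ?D"
    using card_image inj_on_subset[OF inj span_superset] by blast
  have "f ` S \<subseteq> span (f ` ?D)"
  proof
    fix z assume "z \<in> f ` S"
    then obtain x where x: "x \<in> S" "z = f x" by auto
    have be: "b \<union> ?D = C" using C(1) by blast
    have "x \<in> span C" using C(4) x(1) by blast
    then have "x \<in> span (b \<union> ?D)" using be by simp
    then obtain x1 x2 where x12: "x = x1 + x2" "x1 \<in> span b" "x2 \<in> span ?D"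
      unfolding span_Un by auto
    have "f x1 = 0" using x12(2) spanbK by auto
    then have "z = f x2" using x x12 lf.add by simp
    then show "z \<in> span (f ` ?D)" using x12(3) lf.span_image by auto
  qed
  moreover have "f ` ?D \<subseteq> f ` S" using C(2) by auto
  ultimately have "card (f ` ?D) = dim (f ` S)" using basis_card_eq_dim ifD by blast
  moreover have "card ?D = card C - card b" using C(1) b(5) by (simp add: card_Diff_subset)
  ultimately show ?thesis using fC b card_mono[OF fC(1) C(1)] cardfD by linarith
qed

lemma rel_rank_nullity:
  assumes lin: "Vector_Spaces.linear scale scale f" and S: "subspace S" "fdim_in scale S"
    and T: "subspace T"
  shows "dim S + dim (f ` S \<inter> T) = dim {x \<in> S. f x \<in> T} + dim (f ` S)"
proof -
  interpret lf: Vector_Spaces.linear scale scale f by fact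
  let ?S' = "{x \<in> S. f x \<in> T}"
  have S': "subspace ?S'"
    using S(1) T unfolding subspace_def by (auto simp: lf.add lf.scale)
  have fS': "fdim_in scale ?S'" by (rule fin_mono[OF S(2)]) blast
  have 1: "dim S = dim {x \<in> S. f x = 0} + dim (f ` S)" by (rule rank_nullity_fin[OF lin S])
  have 2: "dim ?S' = dim {x \<in> ?S'. f x = 0} + dim (f ` ?S')" by (rule rank_nullity_fin[OF lin S' fS'])
  have "{x \<in> ?S'. f x = 0} = {x \<in> S. f x = 0}" using subspace_0[OF T] by auto
  moreover have "f ` ?S' = f ` S \<inter> T" by auto
  ultimately show ?thesis using 1 2 by simp
qed

lemma hom_dim_le:
  assumes lin: "Vector_Spaces.linear scale scale f"
    and sub: "subspace Z1" "subspace B1" "subspace Z2" "subspace B2"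
    and fin: "fdim_in scale Z1" "fdim_in scale Z2"
    and inc: "B1 \<subseteq> Z1" "B2 \<subseteq> Z2" "f ` Z1 \<subseteq> Z2" "f ` B1 \<subseteq> B2"
    and inj: "\<And>z. z \<in> Z1 \<Longrightarrow> f z \<in> B2 \<Longrightarrow> z \<in> B1"
  shows "dim Z1 + dim B2 \<le> dim Z2 + dim B1"
proof -
  interpret lf: Vector_Spaces.linear scale scale f by fact
  have eq: "{x \<in> Z1. f x \<in> B2} = B1" using inj inc by auto
  have 1: "dim Z1 + dim (f ` Z1 \<inter> B2) = dim B1 + dim (f ` Z1)"
    using rel_rank_nullity[OF lin sub(1) fin(1) sub(4)] eq by simp
  have "subspace (f ` Z1)" by (rule lf.subspace_image[OF sub(1)])
  then have 2: "dim (f ` Z1) + dim B2 \<le> dim Z2 + dim (f ` Z1 \<inter> B2)"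
    by (rule dim_sum_ge[OF _ sub(4) fin(2) inc(3) inc(2)])
  show ?thesis using 1 2 by linarith
qed

lemma hom_dim_ge:
  assumes lin: "Vector_Spaces.linear scale scale f"
    and sub: "subspace Z1" "subspace B1" "subspace Z2" "subspace B2"
    and fin: "fdim_in scale Z1" "fdim_in scale Z2"
    and inc: "B1 \<subseteq> Z1" "B2 \<subseteq> Z2" "f ` Z1 \<subseteq> Z2" "f ` B1 \<subseteq> B2"
    and surj: "\<And>z. z \<in> Z2 \<Longrightarrow> \<exists>x\<in>Z1. z - f x \<in> B2"
  shows "dim Z2 + dim B1 \<le> dim Z1 + dim B2"
proof -
  interpret lf: Vector_Spaces.linear scale scale f by fact
  let ?S' = "{x \<in> Z1. f x \<in> B2}"
  have S': "subspace ?S'"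
    using sub unfolding subspace_def by (auto simp: lf.add lf.scale)
  have fS': "fdim_in scale ?S'" by (rule fin_mono[OF fin(1)]) blast
  have "dim B1 \<le> dim ?S'"
  proof (rule dim_mono_fin[OF _ fS'])
    have "B1 \<subseteq> ?S'" using inc by auto
    then show "B1 \<subseteq> span ?S'" using span_superset by blast
  qed
  have 1: "dim Z1 + dim (f ` Z1 \<inter> B2) = dim ?S' + dim (f ` Z1)"
    by (rule rel_rank_nullity[OF lin sub(1) fin(1) sub(4)])
  have sfZ: "subspace (f ` Z1)" by (rule lf.subspace_image[OF sub(1)])
  let ?P = "{x + y | x y. x \<in> f ` Z1 \<and> y \<in> B2}"
  have Psub: "?P \<subseteq> Z2" using inc sub(3) subspace_add by blast
  have fP: "fdim_in scale ?P" by (rule fin_mono[OF fin(2) Psub])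
  have fB2: "fdim_in scale B2" by (rule fin_mono[OF fin(2) inc(2)])
  have ffZ: "fdim_in scale (f ` Z1)" by (rule fin_mono[OF fin(2) inc(3)])
  have "Z2 \<subseteq> ?P"
  proof
    fix z assume "z \<in> Z2"
    then obtain x where "x \<in> Z1" "z - f x \<in> B2" using surj by blast
    then have "f x \<in> f ` Z1 \<and> z - f x \<in> B2 \<and> z = f x + (z - f x)" by simp
    then show "z \<in> ?P" by blast
  qed
  then have "dim Z2 \<le> dim ?P" by (intro dim_mono_fin[OF _ fP]) (auto intro: span_base)
  moreover have "dim ?P + dim (f ` Z1 \<inter> B2) \<le> dim (f ` Z1) + dim B2"
    by (rule dim_sum_le[OF sfZ sub(4) ffZ fB2])
  ultimately show ?thesis using 1 \<open>dim B1 \<le> dim ?S'\<close> by linarith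
qed

lemma subspace_dim_le_imp_subset:
  assumes "subspace B" "B \<subseteq> Z" "fdim_in scale Z" "dim Z \<le> dim B"
  shows "Z \<subseteq> B"
proof -
  have fB: "fdim_in scale B" by (rule fin_mono[OF assms(3) assms(2)])
  obtain b where b: "b \<subseteq> B" "independent b" "B \<subseteq> span b" "card b = dim B" "finite b"
    using fin_basis[OF fB] by blast
  obtain C where C: "b \<subseteq> C" "C \<subseteq> Z" "independent C" "Z \<subseteq> span C"
    using maximal_independent_subset_extend[of b Z] b assms(2) by blast
  have fC: "finite C" "card C = dim Z"
    using card_indep_le_dim[OF C(2) C(3) assms(3)] basis_card_eq_dim[OF C(2) C(4) C(3)] by auto
  have "C = b" using card_seteq[OF fC(1) C(1)] fC b assms(4) by simp
  then have "Z \<subseteq> span b" using C(4) by simp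
  also have "span b \<subseteq> B" using b(1) assms(1) by (rule span_minimal)
  finally show ?thesis .
qed

end

locale dcx = vector_space scale for scale :: "'a::field \<Rightarrow> 'b::ab_group_add \<Rightarrow> 'b" +
  fixes D :: "int \<Rightarrow> int \<Rightarrow> 'b set" and dh dv :: "'b \<Rightarrow> 'b"
  assumes D_sub: "subspace (D p q)" and D_fin: "fdim_in scale (D p q)"
    and lin_h: "Vector_Spaces.linear scale scale dh"
    and lin_v: "Vector_Spaces.linear scale scale dv"
    and dh_D: "x \<in> D p q \<Longrightarrow> dh x \<in> D (p - 1) q"
    and dv_D: "x \<in> D p q \<Longrightarrow> dv x \<in> D p (q - 1)"
    and hh: "x \<in> D p q \<Longrightarrow> dh (dh x) = 0"
    and vv: "x \<in> D p q \<Longrightarrow> dv (dv x) = 0"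
    and comm: "x \<in> D p q \<Longrightarrow> dh (dv x) = dv (dh x)"
    and dh0: "x \<in> D (-1) q \<Longrightarrow> dh x = 0"
    and R: "0 \<le> q \<Longrightarrow> -1 \<le> p \<Longrightarrow> x \<in> D p q \<Longrightarrow> dh x = 0 \<Longrightarrow> x \<in> dh ` D (p + 1) q"
begin

definition "Zv p q = {x \<in> D p q. dv x = 0}"
definition "Bv p q = dv ` D p (q + 1)"
definition "Zh p q = {x \<in> D p q. dh x = 0}"
definition "Bh p q = dh ` D (p + 1) q"

definition zz :: "nat \<Rightarrow> 'b \<Rightarrow> (nat \<Rightarrow> 'b) \<Rightarrow> bool" where
  "zz n x y \<longleftrightarrow> (\<forall>j\<le>n. y j \<in> D (int j) (int n - int j)) \<and> dh (y 0) = x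
     \<and> (\<forall>j<n. dh (y (Suc j)) = dv (y j))"

definition "CC k \<longleftrightarrow> (\<forall>p. 0 \<le> p \<longrightarrow> p \<le> int k \<longrightarrow>
    (\<forall>x\<in>D p (int k - p). dv x = 0 \<longrightarrow> x \<in> dv ` D p (int k - p + 1)))"
definition "CC' k \<longleftrightarrow> (\<forall>x\<in>D (int k + 1) (-1). x \<in> dv ` D (int k + 1) 0)"

lemma lh: "dh (x + y) = dh x + dh y" "dh (x - y) = dh x - dh y" "dh 0 = 0" "dh (- x) = - dh x"
proof -
  interpret L: Vector_Spaces.linear scale scale dh by (rule lin_h)
  show "dh (x + y) = dh x + dh y" "dh (x - y) = dh x - dh y" "dh 0 = 0" "dh (- x) = - dh x"
    by (auto simp: L.add L.diff L.zero L.neg)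
qed
lemma lv: "dv (x + y) = dv x + dv y" "dv (x - y) = dv x - dv y" "dv 0 = 0" "dv (- x) = - dv x"
proof -
  interpret L: Vector_Spaces.linear scale scale dv by (rule lin_v)
  show "dv (x + y) = dv x + dv y" "dv (x - y) = dv x - dv y" "dv 0 = 0" "dv (- x) = - dv x"
    by (auto simp: L.add L.diff L.zero L.neg)
qed

lemma D_cong: "x \<in> D p q \<Longrightarrow> p = p' \<Longrightarrow> q = q' \<Longrightarrow> x \<in> D p' q'"
  by simp

lemma D_diff: "x \<in> D p q \<Longrightarrow> y \<in> D p q \<Longrightarrow> x - y \<in> D p q"
  using subspace_diff[OF D_sub] by blast
lemma D_add: "x \<in> D p q \<Longrightarrow> y \<in> D p q \<Longrightarrow> x + y \<in> D p q"
  using subspace_add[OF D_sub] by blast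
lemma D_0: "0 \<in> D p q"
  using subspace_0[OF D_sub] by blast

lemma wd:
  assumes z: "zz n x y" and x: "x \<in> Bv (-1) (int n)"
  shows "dv (y n) \<in> Bh (int n) (-1)"
proof -
  have yD: "\<And>j. j \<le> n \<Longrightarrow> y j \<in> D (int j) (int n - int j)"
    and y0: "dh (y 0) = x" and ys: "\<And>j. j < n \<Longrightarrow> dh (y (Suc j)) = dv (y j)"
    using z unfolding zz_def by auto
  have I: "\<exists>v\<in>D (int j) (int n - int j + 1). \<exists>w\<in>D (int j + 1) (int n - int j). y j = dv v + dh w"
    if "j \<le> n" for j
    using that
  proof (induction j)
    case 0
    obtain u where u: "u \<in> D (-1) (int n + 1)" "x = dv u" using x unfolding Bv_def by auto
    have "u \<in> dh ` D (-1 + 1) (int n + 1)" by (rule R) (use u dh0 in auto)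
    then obtain v0 where v0: "v0 \<in> D 0 (int n + 1)" "u = dh v0" by auto
    have xv: "x = dh (dv v0)" using u v0 comm by simp
    have dvv0: "dv v0 \<in> D 0 (int n)" using dv_D[OF v0(1)] by simp
    have "y 0 - dv v0 \<in> D 0 (int n)" using D_diff yD[of 0] dvv0 by simp
    moreover have "dh (y 0 - dv v0) = 0" using y0 xv lh by simp
    ultimately have "y 0 - dv v0 \<in> dh ` D (0 + 1) (int n)" by (intro R) auto
    then obtain w where w: "w \<in> D 1 (int n)" "y 0 - dv v0 = dh w" by auto
    show ?case
      by (rule bexI[of _ v0], rule bexI[of _ w]) (use v0 w in \<open>auto simp: algebra_simps\<close>)
  next
    case (Suc j)
    then obtain v w where vw: "v \<in> D (int j) (int n - int j + 1)" "w \<in> D (int j + 1) (int n - int j)"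
      "y j = dv v + dh w" by auto
    have "dh (y (Suc j)) = dv (y j)" using ys Suc by simp
    also have "\<dots> = dv (dv v) + dv (dh w)" using vw lv by simp
    also have "\<dots> = dh (dv w)" using vv[OF vw(1)] comm[OF vw(2)] by simp
    finally have e: "dh (y (Suc j)) = dh (dv w)" .
    have dvw: "dv w \<in> D (int (Suc j)) (int n - int (Suc j))" by (rule D_cong[OF dv_D[OF vw(2)]]) auto
    have "y (Suc j) - dv w \<in> D (int (Suc j)) (int n - int (Suc j))"
      using D_diff yD[of "Suc j"] dvw Suc by simp
    moreover have "dh (y (Suc j) - dv w) = 0" using e lh by simp
    ultimately have "y (Suc j) - dv w \<in> dh ` D (int (Suc j) + 1) (int n - int (Suc j))"
      by (intro R) (use Suc in auto)
    then obtain w' where w': "w' \<in> D (int (Suc j) + 1) (int n - int (Suc j))" "y (Suc j) - dv w = dh w'"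
      by auto
    have wD: "w \<in> D (int (Suc j)) (int n - int (Suc j) + 1)" by (rule D_cong[OF vw(2)]) auto
    show ?case
      by (rule bexI[OF _ wD], rule bexI[OF _ w'(1)]) (use w' in \<open>auto simp: algebra_simps\<close>)
  qed
  obtain v w where vw: "v \<in> D (int n) (int n - int n + 1)" "w \<in> D (int n + 1) (int n - int n)"
      "y n = dv v + dh w" using I[of n] by auto
  have "dv (y n) = dh (dv w)" using vw lv vv[OF vw(1)] comm[OF vw(2)] by simp
  moreover have "dv w \<in> D (int n + 1) (-1)" using dv_D[OF vw(2)] by simp
  ultimately show ?thesis unfolding Bh_def by auto
qed

lemma inj:
  assumes C: "CC k" and C': "CC' k" and z: "zz k x y" and b: "dv (y k) \<in> Bh (int k) (-1)"
  shows "x \<in> Bv (-1) (int k)"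
proof -
  have yD: "\<And>j. j \<le> k \<Longrightarrow> y j \<in> D (int j) (int k - int j)"
    and y0: "dh (y 0) = x" and ys: "\<And>j. j < k \<Longrightarrow> dh (y (Suc j)) = dv (y j)"
    using z unfolding zz_def by auto
  have Cp: "\<And>p x. 0 \<le> p \<Longrightarrow> p \<le> int k \<Longrightarrow> x \<in> D p (int k - p) \<Longrightarrow> dv x = 0
      \<Longrightarrow> x \<in> dv ` D p (int k - p + 1)"
    using C unfolding CC_def by blast
  have J: "\<exists>s\<in>D (int (k - i) + 1) (int k - int (k - i)). \<exists>t\<in>D (int (k - i)) (int k - int (k - i) + 1).
      y (k - i) = dh s + dv t" if "i \<le> k" for i
    using that
  proof (induction i)
    case 0
    obtain zz' where zz': "zz' \<in> D (int k + 1) (-1)" "dv (y k) = dh zz'" using b unfolding Bh_def by auto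
    obtain w where w: "w \<in> D (int k + 1) 0" "zz' = dv w" using C' zz' unfolding CC'_def by blast
    have dhw: "dh w \<in> D (int k) 0" by (rule D_cong[OF dh_D[OF w(1)]]) auto
    have "y k - dh w \<in> D (int k) (int k - int k)" using D_diff yD[of k] dhw by simp
    moreover have "dv (y k - dh w) = 0" using lv zz' w comm[OF w(1)] by simp
    ultimately have "y k - dh w \<in> dv ` D (int k) (int k - int k + 1)" by (intro Cp) auto
    then obtain t where t: "t \<in> D (int k) (int k - int k + 1)" "y k - dh w = dv t" by auto
    have wD: "w \<in> D (int (k - 0) + 1) (int k - int (k - 0))" by (rule D_cong[OF w(1)]) auto
    show ?case by (rule bexI[OF _ wD], rule bexI[of _ t]) (use t in \<open>auto simp: algebra_simps\<close>)
  next
    case (Suc i)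
    define j where "j = k - i"
    have j1: "j \<ge> 1" "k - Suc i = j - 1" "j \<le> k" using Suc.prems j_def by auto
    obtain s t where st: "s \<in> D (int j + 1) (int k - int j)" "t \<in> D (int j) (int k - int j + 1)"
      "y j = dh s + dv t" using Suc j_def by auto
    have "dv (y (j - 1)) = dh (y (Suc (j - 1)))" using ys[of "j - 1"] j1 by simp
    also have "\<dots> = dh (y j)" using j1 by simp
    also have "\<dots> = dh (dh s) + dh (dv t)" using st lh by simp
    also have "\<dots> = dv (dh t)" using hh[OF st(1)] comm[OF st(2)] by simp
    finally have e: "dv (y (j - 1)) = dv (dh t)" .
    have dht: "dh t \<in> D (int (j - 1)) (int k - int (j - 1))" by (rule D_cong[OF dh_D[OF st(2)]]) (use j1 in auto)
    have "y (j - 1) - dh t \<in> D (int (j - 1)) (int k - int (j - 1))"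
      using D_diff yD[of "j - 1"] dht j1 by simp
    moreover have "dv (y (j - 1) - dh t) = 0" using e lv by simp
    ultimately have "y (j - 1) - dh t \<in> dv ` D (int (j - 1)) (int k - int (j - 1) + 1)"
      by (intro Cp) (use j1 in auto)
    then obtain t' where t': "t' \<in> D (int (j - 1)) (int k - int (j - 1) + 1)" "y (j - 1) - dh t = dv t'"
      by auto
    have tD: "t \<in> D (int (j - 1) + 1) (int k - int (j - 1))" by (rule D_cong[OF st(2)]) (use j1 in auto)
    show ?case unfolding j1(2)
      by (rule bexI[OF _ tD], rule bexI[OF _ t'(1)]) (use t' in \<open>auto simp: algebra_simps\<close>)
  qed
  obtain s t where st: "s \<in> D (int 0 + 1) (int k - int 0)" "t \<in> D (int 0) (int k - int 0 + 1)"
    "y 0 = dh s + dv t" using J[of k] by auto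
  have "x = dv (dh t)" using y0 st lh hh[OF st(1)] comm[OF st(2)] by simp
  moreover have "dh t \<in> D (-1) (int k + 1)" by (rule D_cong[OF dh_D[OF st(2)]]) auto
  ultimately show ?thesis unfolding Bv_def by auto
qed

lemma surj:
  assumes C: "CC k" and C': "CC' k" and z: "z \<in> Zh (int k + 1) (-1)"
  shows "\<exists>x\<in>Zv (-1) (int (Suc k)). \<exists>y. zz (Suc k) x y \<and> dv (y (Suc k)) = z"
proof -
  have Cp: "\<And>p x. 0 \<le> p \<Longrightarrow> p \<le> int k \<Longrightarrow> x \<in> D p (int k - p) \<Longrightarrow> dv x = 0
      \<Longrightarrow> x \<in> dv ` D p (int k - p + 1)"
    using C unfolding CC_def by blast
  have zD: "z \<in> D (int k + 1) (-1)" "dh z = 0" using z unfolding Zh_def by auto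
  have P: "\<exists>ws. (\<forall>i'\<le>i. ws i' \<in> D (int k + 1 - int i') (int i')) \<and> dv (ws 0) = z
      \<and> (\<forall>i'<i. dv (ws (Suc i')) = dh (ws i'))" if "i \<le> Suc k" for i
    using that
  proof (induction i)
    case 0
    obtain w where w: "w \<in> D (int k + 1) 0" "z = dv w" using C' zD unfolding CC'_def by blast
    show ?case by (rule exI[of _ "\<lambda>_. w"]) (use w in auto)
  next
    case (Suc i)
    then obtain ws where ws: "\<forall>i'\<le>i. ws i' \<in> D (int k + 1 - int i') (int i')" "dv (ws 0) = z"
      "\<forall>i'<i. dv (ws (Suc i')) = dh (ws i')" by auto
    have ik: "i \<le> k" using Suc by simp
    have wsi: "ws i \<in> D (int k + 1 - int i) (int i)" using ws(1) by simp
    have dhD: "dh (ws i) \<in> D (int k - int i) (int k - (int k - int i))"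
      by (rule D_cong[OF dh_D[OF wsi]]) auto
    have "dv (dh (ws i)) = 0"
    proof (cases i)
      case 0
      then show ?thesis using comm[OF wsi] ws(2) zD by simp
    next
      case (Suc i0)
      then have "dv (ws i) = dh (ws i0)" using ws(3) by simp
      moreover have "ws i0 \<in> D (int k + 1 - int i0) (int i0)" using ws(1) Suc by simp
      ultimately show ?thesis using comm[OF wsi] hh by simp
    qed
    then have "dh (ws i) \<in> dv ` D (int k - int i) (int k - (int k - int i) + 1)"
      by (intro Cp[OF _ _ dhD]) (use ik in auto)
    then obtain w' where w': "w' \<in> D (int k - int i) (int k - (int k - int i) + 1)" "dh (ws i) = dv w'"
      by auto
    show ?case
    proof (rule exI[of _ "ws(Suc i := w')"], intro conjI allI impI)
      fix i' assume "i' \<le> Suc i"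
      then show "(ws(Suc i := w')) i' \<in> D (int k + 1 - int i') (int i')"
        using ws(1) D_cong[OF w'(1)] by (cases "i' = Suc i") auto
    next
      show "dv ((ws(Suc i := w')) 0) = z" using ws by simp
    next
      fix i' assume "i' < Suc i"
      then show "dv ((ws(Suc i := w')) (Suc i')) = dh ((ws(Suc i := w')) i')"
        using ws(3) w' by (cases "i' = i") auto
    qed
  qed
  obtain ws where ws: "\<forall>i'\<le>Suc k. ws i' \<in> D (int k + 1 - int i') (int i')" "dv (ws 0) = z"
      "\<forall>i'<Suc k. dv (ws (Suc i')) = dh (ws i')" using P[of "Suc k"] by auto
  define y where "y j = ws (Suc k - j)" for j
  define x where "x = dh (ws (Suc k))"
  have "zz (Suc k) x y" unfolding zz_def
  proof (intro conjI allI impI)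
    fix j assume j: "j \<le> Suc k"
    have a: "ws (Suc k - j) \<in> D (int k + 1 - int (Suc k - j)) (int (Suc k - j))" using ws(1) by auto
    show "y j \<in> D (int j) (int (Suc k) - int j)"
      unfolding y_def by (rule D_cong[OF a]) (use j in \<open>auto simp: of_nat_diff\<close>)
  next
    show "dh (y 0) = x" unfolding y_def x_def by simp
  next
    fix j assume j: "j < Suc k"
    then have "Suc k - j = Suc (k - j)" "Suc k - Suc j = k - j" by auto
    then show "dh (y (Suc j)) = dv (y j)" unfolding y_def using ws(3) j by simp
  qed
  moreover have "x \<in> Zv (-1) (int (Suc k))"
  proof -
    have w1: "ws (Suc k) \<in> D 0 (int (Suc k))" using ws(1)[rule_format, of "Suc k"] by simp
    have "x \<in> D (-1) (int (Suc k))" unfolding x_def using dh_D[OF w1] by simp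
    moreover have "dv x = 0"
    proof -
      have wk: "ws k \<in> D (int k + 1 - int k) (int k)" using ws(1)[rule_format, of k] by simp
      have "dv (ws (Suc k)) = dh (ws k)" using ws(3) by simp
      then show ?thesis using comm[OF w1] hh[OF wk] unfolding x_def by simp
    qed
    ultimately show ?thesis unfolding Zv_def by simp
  qed
  moreover have "dv (y (Suc k)) = z" unfolding y_def using ws(2) by simp
  ultimately show ?thesis by blast
qed

lemma zz_diff:
  assumes "zz n x y" "zz n x' y'"
  shows "zz n (x - x') (\<lambda>j. y j - y' j)"
  using assms unfolding zz_def by (auto simp: lh lv D_diff)

lemma zz_cycle:
  assumes "zz n x y" "x \<in> Zv (-1) (int n)"
  shows "dv (y n) \<in> Zh (int n) (-1)"
proof -
  have yn: "y n \<in> D (int n) 0" using assms(1) unfolding zz_def by auto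
  have "dh (dv (y n)) = 0"
  proof (cases n)
    case 0
    then show ?thesis using assms comm[OF yn] unfolding zz_def Zv_def by auto
  next
    case (Suc n0)
    then have "dh (y n) = dv (y n0)" using assms(1) unfolding zz_def by auto
    moreover have "y n0 \<in> D (int n0) (int n - int n0)"
      using assms(1) Suc unfolding zz_def by (metis le_SucI order_refl)
    ultimately show ?thesis using comm[OF yn] vv by simp
  qed
  moreover have "dv (y n) \<in> D (int n) (-1)" using dv_D[OF yn] by simp
  ultimately show ?thesis unfolding Zh_def by simp
qed

lemma lhs: "dh (scale c x) = scale c (dh x)"
proof -
  interpret L: Vector_Spaces.linear scale scale dh by (rule lin_h)
  show ?thesis by (rule L.scale)
qed
lemma lvs: "dv (scale c x) = scale c (dv x)"
proof -
  interpret L: Vector_Spaces.linear scale scale dv by (rule lin_v)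
  show ?thesis by (rule L.scale)
qed

lemma Zv_sub: "subspace (Zv p q)"
  using D_sub[of p q] unfolding Zv_def subspace_def by (auto simp: lv lvs)
lemma Zh_sub: "subspace (Zh p q)"
  using D_sub[of p q] unfolding Zh_def subspace_def by (auto simp: lh lhs)
lemma Bv_sub: "subspace (Bv p q)"
proof -
  interpret L: Vector_Spaces.linear scale scale dv by (rule lin_v)
  show ?thesis unfolding Bv_def by (rule L.subspace_image[OF D_sub])
qed
lemma Bh_sub: "subspace (Bh p q)"
proof -
  interpret L: Vector_Spaces.linear scale scale dh by (rule lin_h)
  show ?thesis unfolding Bh_def by (rule L.subspace_image[OF D_sub])
qed
lemma Zv_fin: "fdim_in scale (Zv p q)"
  by (rule fin_mono[OF D_fin]) (auto simp: Zv_def)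
lemma Zh_fin: "fdim_in scale (Zh p q)"
  by (rule fin_mono[OF D_fin]) (auto simp: Zh_def)
lemma Bv_Zv: "Bv p q \<subseteq> Zv p q"
  unfolding Bv_def Zv_def using dv_D vv by fastforce
lemma Bh_Zh: "Bh p q \<subseteq> Zh p q"
  unfolding Bh_def Zh_def using dh_D hh by fastforce

definition gr :: "int \<Rightarrow> int \<Rightarrow> 'b \<Rightarrow> 'b" where
  "gr p q = (SOME g. range g \<subseteq> D p q \<and> Vector_Spaces.linear scale scale g
      \<and> (\<forall>v\<in>dh ` D p q. dh (g v) = v))"

lemma gr: "range (gr p q) \<subseteq> D p q \<and> Vector_Spaces.linear scale scale (gr p q)
      \<and> (\<forall>v\<in>dh ` D p q. dh (gr p q v) = v)"
proof -
  interpret P: vector_space_pair scale scale by unfold_locales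
  obtain g where "g ` UNIV \<subseteq> D p q" "Vector_Spaces.linear scale scale g" "\<forall>v\<in>dh ` D p q. dh (g v) = v"
    using P.linear_exists_right_inverse_on[OF lin_h D_sub] by blast
  define P where "P = (\<lambda>g. range g \<subseteq> D p q \<and> Vector_Spaces.linear scale scale g
      \<and> (\<forall>v\<in>dh ` D p q. dh (g v) = v))"
  have "P g" unfolding P_def using \<open>g ` UNIV \<subseteq> D p q\<close> \<open>Vector_Spaces.linear scale scale g\<close>
    \<open>\<forall>v\<in>dh ` D p q. dh (g v) = v\<close> by blast
  then have "P (Eps P)" by (rule someI[of P g])
  moreover have "gr p q = Eps P" unfolding gr_def P_def by simp
  ultimately show ?thesis unfolding P_def by simp
qed

lemma gr_D: "gr p q x \<in> D p q"
  using gr[of p q] by blast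
lemma gr_inv: "v \<in> dh ` D p q \<Longrightarrow> dh (gr p q v) = v"
  using gr[of p q] by blast

primrec Y :: "nat \<Rightarrow> nat \<Rightarrow> 'b \<Rightarrow> 'b" where
  "Y n 0 x = gr 0 (int n) x"
| "Y n (Suc j) x = gr (int (Suc j)) (int n - int (Suc j)) (dv (Y n j x))"

definition "Phi n x = dv (Y n n x)"

lemma Y_lin: "Vector_Spaces.linear scale scale (Y n j)"
proof (induction j)
  case 0
  have "Y n 0 = gr 0 (int n)" by (rule ext) simp
  then show ?case using gr by simp
next
  case (Suc j)
  have "Y n (Suc j) = gr (int (Suc j)) (int n - int (Suc j)) \<circ> (dv \<circ> Y n j)" by (rule ext) simp
  moreover have "Vector_Spaces.linear scale scale (dv \<circ> Y n j)"
    by (rule Vector_Spaces.linear_compose[OF Suc lin_v])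
  ultimately show ?case using Vector_Spaces.linear_compose gr by metis
qed

lemma Phi_lin: "Vector_Spaces.linear scale scale (Phi n)"
proof -
  have "Phi n = dv \<circ> Y n n" by (rule ext) (simp add: Phi_def)
  then show ?thesis using Vector_Spaces.linear_compose[OF Y_lin lin_v] by simp
qed

lemma Y_D: "Y n j x \<in> D (int j) (int n - int j)"
  by (cases j) (simp_all add: gr_D)

lemma Y_dh:
  assumes x: "x \<in> Zv (-1) (int n)"
  shows "j \<le> n \<Longrightarrow> dh (Y n j x) = (case j of 0 \<Rightarrow> x | Suc i \<Rightarrow> dv (Y n i x))"
proof (induction j)
  case 0
  have xD: "x \<in> D (-1) (int n)" "dv x = 0" using x unfolding Zv_def by auto
  have "x \<in> dh ` D (-1 + 1) (int n)" by (rule R) (use xD dh0 in auto)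
  then show ?case using gr_inv[of x 0 "int n"] by simp
next
  case (Suc j)
  have xD: "x \<in> D (-1) (int n)" "dv x = 0" using x unfolding Zv_def by auto
  have YD: "Y n j x \<in> D (int j) (int n - int j)" by (rule Y_D)
  have dvD: "dv (Y n j x) \<in> D (int j) (int n - int (Suc j))" by (rule D_cong[OF dv_D[OF YD]]) auto
  have "dh (dv (Y n j x)) = 0"
  proof -
    have "dh (dv (Y n j x)) = dv (dh (Y n j x))" by (rule comm[OF YD])
    also have "\<dots> = 0"
    proof (cases j)
      case 0 then show ?thesis using Suc xD by simp
    next
      case (Suc i)
      then show ?thesis using Suc.IH Suc.prems vv[OF Y_D] by simp
    qed
    finally show ?thesis .
  qed
  then have "dv (Y n j x) \<in> dh ` D (int j + 1) (int n - int (Suc j))"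
    by (intro R[OF _ _ dvD]) (use Suc.prems in auto)
  moreover have "int j + 1 = int (Suc j)" by simp
  ultimately have "dv (Y n j x) \<in> dh ` D (int (Suc j)) (int n - int (Suc j))" by metis
  then show ?case using gr_inv[of "dv (Y n j x)" "int (Suc j)" "int n - int (Suc j)"] by simp
qed

lemma Y_zz:
  assumes x: "x \<in> Zv (-1) (int n)"
  shows "zz n x (\<lambda>j. Y n j x)"
proof -
  have a: "dh (Y n 0 x) = x" using Y_dh[OF x, of 0] by (simp del: Y.simps)
  have b: "\<forall>j<n. dh (Y n (Suc j) x) = dv (Y n j x)" using Y_dh[OF x] by (simp del: Y.simps)
  show ?thesis unfolding zz_def using Y_D a b by (simp del: Y.simps)
qed

lemma Phi_Z: "x \<in> Zv (-1) (int n) \<Longrightarrow> Phi n x \<in> Zh (int n) (-1)"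
  unfolding Phi_def by (rule zz_cycle[OF Y_zz])

lemma Phi_B: "x \<in> Bv (-1) (int n) \<Longrightarrow> Phi n x \<in> Bh (int n) (-1)"
  unfolding Phi_def by (rule wd[OF Y_zz]) (use Bv_Zv in auto)

theorem main:
  assumes C: "CC k" and C': "CC' k"
  shows "dim (Zv (-1) (int k)) + dim (Bh (int k) (-1)) \<le> dim (Zh (int k) (-1)) + dim (Bv (-1) (int k))"
    and "dim (Zh (int k + 1) (-1)) + dim (Bv (-1) (int k + 1))
         \<le> dim (Zv (-1) (int k + 1)) + dim (Bh (int k + 1) (-1))"
proof -
  show "dim (Zv (-1) (int k)) + dim (Bh (int k) (-1)) \<le> dim (Zh (int k) (-1)) + dim (Bv (-1) (int k))"
  proof (rule hom_dim_le[OF Phi_lin[of k] Zv_sub Bv_sub Zh_sub Bh_sub Zv_fin Zh_fin Bv_Zv Bh_Zh])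
    show "Phi k ` Zv (-1) (int k) \<subseteq> Zh (int k) (-1)" using Phi_Z by blast
    show "Phi k ` Bv (-1) (int k) \<subseteq> Bh (int k) (-1)" using Phi_B by blast
    fix z assume "z \<in> Zv (-1) (int k)" "Phi k z \<in> Bh (int k) (-1)"
    then show "z \<in> Bv (-1) (int k)" using inj[OF C C' Y_zz] unfolding Phi_def by blast
  qed
  have e: "int k + 1 = int (Suc k)" by simp
  show "dim (Zh (int k + 1) (-1)) + dim (Bv (-1) (int k + 1))
         \<le> dim (Zv (-1) (int k + 1)) + dim (Bh (int k + 1) (-1))"
    unfolding e
  proof (rule hom_dim_ge[OF Phi_lin[of "Suc k"] Zv_sub Bv_sub Zh_sub Bh_sub Zv_fin Zh_fin Bv_Zv Bh_Zh])
    show "Phi (Suc k) ` Zv (-1) (int (Suc k)) \<subseteq> Zh (int (Suc k)) (-1)" using Phi_Z by blast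
    show "Phi (Suc k) ` Bv (-1) (int (Suc k)) \<subseteq> Bh (int (Suc k)) (-1)" using Phi_B by blast
    fix z assume z: "z \<in> Zh (int (Suc k)) (-1)"
    have eqk: "int (Suc k) = int k + 1" by simp
    have z': "z \<in> Zh (int k + 1) (-1)" using z unfolding eqk .
    obtain x y where xy: "x \<in> Zv (-1) (int (Suc k))" "zz (Suc k) x y" "dv (y (Suc k)) = z"
      using surj[OF C C' z'] by blast
    have "zz (Suc k) (x - x) (\<lambda>j. Y (Suc k) j x - y j)" by (rule zz_diff[OF Y_zz[OF xy(1)] xy(2)])
    moreover have "x - x \<in> Bv (-1) (int (Suc k))" using Bv_sub subspace_0 by auto
    ultimately have "dv (Y (Suc k) (Suc k) x - y (Suc k)) \<in> Bh (int (Suc k)) (-1)" by (rule wd)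
    then have "dv (Y (Suc k) (Suc k) x) - z \<in> Bh (int (Suc k)) (-1)"
      using xy(3) lv(2) by metis
    then have "- (Phi (Suc k) x - z) \<in> Bh (int (Suc k)) (-1)"
      using subspace_neg[OF Bh_sub] unfolding Phi_def by blast
    then have "z - Phi (Suc k) x \<in> Bh (int (Suc k)) (-1)" by simp
    then show "\<exists>x\<in>Zv (-1) (int (Suc k)). z - Phi (Suc k) x \<in> Bh (int (Suc k)) (-1)"
      using xy(1) by blast
  qed
qed

end

definition sg :: "'v::linorder \<Rightarrow> 'v set \<Rightarrow> 'k::field" where
  "sg v t = (-1) ^ card {u \<in> t. u < v}"

definition bd :: "'v::linorder set \<Rightarrow> ('v set \<Rightarrow> 'k::field) \<Rightarrow> ('v set \<Rightarrow> 'k)" where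
  "bd V c = (\<lambda>t. \<Sum>v \<in> V - t. sg v t * c (insert v t))"

lemma boundary_bd: "boundary K c = bd (\<Union>K) c"
  unfolding boundary_def bd_def sg_def by simp

lemma sg_sq: "sg v t * sg v t = (1::'k::field)"
  unfolding sg_def by (simp add: power_mult_distrib[symmetric] flip: power_add mult_2)

lemma sg_insert:
  assumes "finite t" "u \<notin> t" "u \<noteq> v"
  shows "sg v (insert u t) = (if u < v then - sg v t else (sg v t :: 'k::field))"
proof (cases "u < v")
  case True
  then have "{w \<in> insert u t. w < v} = insert u {w \<in> t. w < v}" by auto
  moreover have "card (insert u {w \<in> t. w < v}) = Suc (card {w \<in> t. w < v})"
    using assms by simp
  ultimately show ?thesis using True unfolding sg_def by simp
next
  case False
  then have "{w \<in> insert u t. w < v} = {w \<in> t. w < v}" by auto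
  then show ?thesis using False unfolding sg_def by simp
qed

lemma sg_swap:
  assumes "finite t" "v \<notin> t" "w \<notin> t" "v \<noteq> w"
  shows "sg w t * sg v (insert w t) = - (sg v t * sg w (insert v t) :: 'k::field)"
proof (cases "v < w")
  case True
  then have "\<not> w < v" by auto
  then show ?thesis using True assms sg_insert[where 'k='k, of t w v] sg_insert[where 'k='k, of t v w] by (simp add: algebra_simps)
next
  case False
  then have "w < v" using assms(4) by auto
  then show ?thesis using False assms sg_insert[where 'k='k, of t w v] sg_insert[where 'k='k, of t v w] by (simp add: algebra_simps)
qed

lemma bd_bd_fin:
  assumes V: "finite V" and t: "finite t"
  shows "bd V (bd V c) t = (0::'k::field)"
proof -
  define f where "f = (\<lambda>(v, w). sg v t * sg w (insert v t) * (c (insert w (insert v t)) :: 'k))"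
  define P where "P = Sigma (V - t) (\<lambda>v. V - insert v t)"
  have "bd V (bd V c) t = (\<Sum>v\<in>V - t. \<Sum>w\<in>V - insert v t. f (v, w))"
    unfolding bd_def f_def by (simp add: sum_distrib_left mult.assoc)
  also have "\<dots> = sum f P" unfolding P_def using V by (simp add: sum.Sigma)
  also have "P = {p\<in>P. fst p < snd p} \<union> {p\<in>P. snd p < fst p}"
    unfolding P_def by (auto simp: neq_iff)
  also have "sum f \<dots> = sum f {p\<in>P. fst p < snd p} + sum f {p\<in>P. snd p < fst p}"
    by (rule sum.union_disjoint) (use V in \<open>auto simp: P_def\<close>)
  also have "{p\<in>P. snd p < fst p} = prod.swap ` {p\<in>P. fst p < snd p}"
    unfolding P_def by force
  also have "sum f \<dots> = sum (f \<circ> prod.swap) {p\<in>P. fst p < snd p}"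
    by (rule sum.reindex) (simp add: inj_on_def)
  also have "\<dots> = sum (\<lambda>p. - f p) {p\<in>P. fst p < snd p}"
  proof (rule sum.cong[OF refl])
    fix p assume "p \<in> {p\<in>P. fst p < snd p}"
    then obtain v w where p: "p = (v, w)" "v \<in> V - t" "w \<in> V - t" "v < w" unfolding P_def by auto
    have ins: "insert v (insert w t) = insert w (insert v t)" by auto
    have s: "sg w t * sg v (insert w t) = - (sg v t * sg w (insert v t) :: 'k)"
      by (rule sg_swap) (use p t in auto)
    have "(f \<circ> prod.swap) p = (sg w t * sg v (insert w t)) * c (insert w (insert v t))"
      unfolding f_def p(1) using ins by simp
    also have "\<dots> = - f p" unfolding s f_def p(1) by simp
    finally show "(f \<circ> prod.swap) p = - f p" .
  qed
  finally show ?thesis by (simp add: sum_negf)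
qed

lemma bd_bd:
  assumes V: "finite V" and c: "\<And>s. infinite s \<Longrightarrow> c s = 0"
  shows "bd V (bd V c) = (\<lambda>_. (0::'k::field))"
proof
  fix t show "bd V (bd V c) t = 0"
  proof (cases "finite t")
    case True then show ?thesis by (rule bd_bd_fin[OF V])
  next
    case False
    then show ?thesis unfolding bd_def using c by simp
  qed
qed

lemma bd_cong_V:
  assumes "V \<subseteq> V'" "finite V'" "\<And>s. c s \<noteq> 0 \<Longrightarrow> s \<subseteq> V"
  shows "bd V' c = (bd V c :: 'v::linorder set \<Rightarrow> 'k::field)"
proof
  fix t
  have z: "\<forall>v\<in>V' - t - (V - t). sg v t * c (insert v t) = 0" using assms(3) by auto
  show "bd V' c t = bd V c t" unfolding bd_def
    by (rule sum.mono_neutral_right) (use assms z in auto)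
qed

definition hc :: "'v::linorder \<Rightarrow> ('v set \<Rightarrow> 'k::field) \<Rightarrow> ('v set \<Rightarrow> 'k)" where
  "hc a f = (\<lambda>s. if a \<in> s then sg a (s - {a}) * f (s - {a}) else 0)"

lemma cone:
  assumes V: "finite V" "a \<in> V" and f0: "\<And>s. infinite s \<Longrightarrow> f s = 0"
    and cyc: "bd V f = (\<lambda>_. 0)"
  shows "bd V (hc a f) = (f :: 'v::linorder set \<Rightarrow> 'k::field)"
proof
  fix t
  show "bd V (hc a f) t = f t"
  proof (cases "finite t")
    case False
    have z: "f (insert v t - {a}) = 0" for v
    proof -
      have "infinite (insert v t - {a})" using False by auto
      then show ?thesis by (rule f0)
    qed
    have "bd V (hc a f) t = 0" unfolding bd_def hc_def by (rule sum.neutral) (simp add: z)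
    then show ?thesis using f0[OF False] by simp
  next
    case fin: True
    show ?thesis
    proof (cases "a \<in> t")
      case False
      have "bd V (hc a f) t = (\<Sum>v\<in>V - t. if v = a then sg a t * (sg a t * f t) else 0)"
        unfolding bd_def hc_def
        by (rule sum.cong[OF refl]) (use False in auto)
      also have "\<dots> = sg a t * (sg a t * f t)" using V False by (simp add: sum.delta')
      also have "\<dots> = f t" using sg_sq[where 'k='k, of a t] by (simp add: mult.assoc[symmetric])
      finally show ?thesis .
    next
      case True
      define t' where "t' = t - {a}"
      have tt: "t = insert a t'" "a \<notin> t'" "finite t'" using True fin unfolding t'_def by auto
      have Vt: "V - t' = insert a (V - t)" using V True unfolding t'_def by auto
      have "0 = bd V f t'" using cyc by simp
      also have "\<dots> = sg a t' * f t + (\<Sum>v\<in>V - t. sg v t' * f (insert v t'))"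
        unfolding bd_def Vt using V True tt by (simp add: sum.insert)
      finally have e: "sg a t' * f t + (\<Sum>v\<in>V - t. sg v t' * f (insert v t')) = 0" by simp
      have "bd V (hc a f) t = (\<Sum>v\<in>V - t. sg v t * (sg a (insert v t') * f (insert v t')))"
        unfolding bd_def hc_def
      proof (rule sum.cong[OF refl])
        fix v assume v: "v \<in> V - t"
        then have "v \<noteq> a" "insert v t - {a} = insert v t'" using True tt by auto
        then show "sg v t * (if a \<in> insert v t then sg a (insert v t - {a}) * f (insert v t - {a}) else 0)
            = sg v t * (sg a (insert v t') * f (insert v t'))" using True by simp
      qed
      also have "\<dots> = (\<Sum>v\<in>V - t. - (sg a t' * (sg v t' * f (insert v t'))))"
      proof (rule sum.cong[OF refl])
        fix v assume v: "v \<in> V - t"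
        then have vt: "v \<notin> t'" "v \<noteq> a" using tt by auto
        have s1: "sg v t = (if a < v then - sg v t' else (sg v t' :: 'k))"
          unfolding tt(1) by (rule sg_insert) (use tt vt in auto)
        have s2: "sg a (insert v t') = (if v < a then - sg a t' else (sg a t' :: 'k))"
          by (rule sg_insert) (use tt vt in auto)
        have s3: "sg v t * sg a (insert v t') = - (sg a t' * sg v t' :: 'k)"
        proof (cases "a < v")
          case True
          then have "\<not> v < a" by auto
          then show ?thesis using True s1 s2 by (simp add: mult.commute)
        next
          case False
          then have "v < a" using vt(2) by auto
          then show ?thesis using False s1 s2 by (simp add: mult.commute)
        qed
        have "sg v t * (sg a (insert v t') * f (insert v t'))
            = (sg v t * sg a (insert v t')) * f (insert v t')" by (simp only: mult.assoc)
        also have "\<dots> = - (sg a t' * sg v t') * f (insert v t')" by (simp only: s3)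
        also have "\<dots> = - (sg a t' * (sg v t' * f (insert v t')))" by (simp add: mult.assoc)
        finally show "sg v t * (sg a (insert v t') * f (insert v t')) = - (sg a t' * (sg v t' * f (insert v t')))" .
      qed
      also have "\<dots> = - (sg a t' * (\<Sum>v\<in>V - t. sg v t' * f (insert v t')))"
        by (simp add: sum_negf sum_distrib_left)
      also have "\<dots> = sg a t' * (sg a t' * f t)"
      proof -
        have "(\<Sum>v\<in>V - t. sg v t' * f (insert v t')) = - (sg a t' * f t)"
          using e by (simp add: eq_neg_iff_add_eq_0 add.commute)
        then show ?thesis by simp
      qed
      also have "\<dots> = f t" using sg_sq[where 'k='k, of a t'] by (simp add: mult.assoc[symmetric])
      finally show ?thesis .
    qed
  qed
qed

definition sc :: "'k::field \<Rightarrow> ('i \<Rightarrow> 'k) \<Rightarrow> ('i \<Rightarrow> 'k)" where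
  "sc a c = (\<lambda>x. a * c x)"

lemma vs_sc: "vector_space (sc :: 'k::field \<Rightarrow> ('i \<Rightarrow> 'k) \<Rightarrow> ('i \<Rightarrow> 'k))"
  unfolding vector_space_def sc_def by (auto simp: fun_eq_iff algebra_simps)

lemma chain_scale_sc: "chain_scale = sc"
  by (intro ext) (simp add: chain_scale_def sc_def)

lemma linear_scI:
  assumes "\<And>x y. f (x + y) = f x + f y" "\<And>a x. f (sc a x) = sc a (f x)"
  shows "Vector_Spaces.linear (sc :: 'k::field \<Rightarrow> ('i \<Rightarrow> 'k) \<Rightarrow> ('i \<Rightarrow> 'k))
     (sc :: 'k \<Rightarrow> ('j \<Rightarrow> 'k) \<Rightarrow> ('j \<Rightarrow> 'k)) f"
  using assms vs_sc[where 'i='i and 'k='k] vs_sc[where 'i='j and 'k='k] by (auto simp: Vector_Spaces.linear_iff)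

lemma subspace_scI:
  assumes "0 \<in> S" "\<And>x y. x \<in> S \<Longrightarrow> y \<in> S \<Longrightarrow> x + y \<in> S" "\<And>a x. x \<in> S \<Longrightarrow> sc a x \<in> S"
  shows "module.subspace (sc :: 'k::field \<Rightarrow> ('i \<Rightarrow> 'k) \<Rightarrow> ('i \<Rightarrow> 'k)) S"
proof -
  interpret vector_space "sc :: 'k::field \<Rightarrow> ('i \<Rightarrow> 'k) \<Rightarrow> ('i \<Rightarrow> 'k)" by (rule vs_sc)
  show ?thesis unfolding subspace_def using assms by blast
qed

lemma subspace_support:
  "module.subspace (sc :: 'k::field \<Rightarrow> ('i \<Rightarrow> 'k) \<Rightarrow> ('i \<Rightarrow> 'k)) {c. \<forall>x. c x \<noteq> 0 \<longrightarrow> P x}"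
proof (rule subspace_scI)
  fix x y :: "'i \<Rightarrow> 'k"
  assume x: "x \<in> {c. \<forall>x. c x \<noteq> 0 \<longrightarrow> P x}" and y: "y \<in> {c. \<forall>x. c x \<noteq> 0 \<longrightarrow> P x}"
  show "x + y \<in> {c. \<forall>x. c x \<noteq> 0 \<longrightarrow> P x}"
  proof (intro CollectI allI impI)
    fix z assume "(x + y) z \<noteq> 0"
    then have "x z \<noteq> 0 \<or> y z \<noteq> 0" by auto
    then show "P z" using x y by blast
  qed
qed (auto simp: sc_def)

lemma chains_eq: "chains K q = {c. \<forall>x. c x \<noteq> 0 \<longrightarrow> x \<in> K \<and> int (card x) = q + 1}"
  unfolding chains_def by simp

lemma fin_support:
  assumes "finite P"
  shows "fdim_in (sc :: 'k::field \<Rightarrow> ('i \<Rightarrow> 'k) \<Rightarrow> ('i \<Rightarrow> 'k)) {c. \<forall>x. c x \<noteq> 0 \<longrightarrow> x \<in> P}"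
proof -
  interpret vector_space "sc :: 'k::field \<Rightarrow> ('i \<Rightarrow> 'k) \<Rightarrow> ('i \<Rightarrow> 'k)" by (rule vs_sc)
  define e :: "'i \<Rightarrow> 'i \<Rightarrow> 'k" where "e x = (\<lambda>y. if y = x then 1 else 0)" for x
  have "{c. \<forall>x. c x \<noteq> 0 \<longrightarrow> x \<in> P} \<subseteq> span (e ` P)"
  proof
    fix c :: "'i \<Rightarrow> 'k" assume c: "c \<in> {c. \<forall>x. c x \<noteq> 0 \<longrightarrow> x \<in> P}"
    have "c = (\<Sum>x\<in>P. sc (c x) (e x))"
    proof
      fix y
      have "(\<Sum>x\<in>P. sc (c x) (e x)) y = (\<Sum>x\<in>P. c x * e x y)"
        by (induction P rule: infinite_finite_induct) (auto simp: sc_def)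
      also have "\<dots> = (\<Sum>x\<in>P. if x = y then c y else 0)"
        by (rule sum.cong) (auto simp: e_def)
      also have "\<dots> = c y" using assms c by (auto simp: sum.delta)
      finally show "c y = (\<Sum>x\<in>P. sc (c x) (e x)) y" by simp
    qed
    also have "\<dots> \<in> span (e ` P)"
      by (intro span_sum span_scale span_base) auto
    finally show "c \<in> span (e ` P)" .
  qed
  then show ?thesis unfolding fdim_in_def using assms by blast
qed

lemma dim_inj_image:
  assumes "vector_space s1" "vector_space s2" "Vector_Spaces.linear s1 s2 f" "inj f"
  shows "vector_space.dim s2 (f ` S) = vector_space.dim s1 S"
proof -
  interpret P: vector_space_pair s1 s2 using assms by (simp add: vector_space_pair_def)
  interpret L: Vector_Spaces.linear s1 s2 f by fact
  obtain B where B: "B \<subseteq> S" "P.vs1.independent B" "S \<subseteq> P.vs1.span B" "card B = P.vs1.dim S"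
    using P.vs1.basis_exists by blast
  have "P.vs2.independent (f ` B)"
    using L.independent_injective_image[OF B(2)] inj_on_subset[OF assms(4)] by blast
  moreover have "f ` B \<subseteq> f ` S" using B by auto
  moreover have "f ` S \<subseteq> P.vs2.span (f ` B)" using L.spans_image[OF B(3)] .
  ultimately have "card (f ` B) = P.vs2.dim (f ` S)" using P.vs2.basis_card_eq_dim by blast
  moreover have "card (f ` B) = card B" using card_image inj_on_subset[OF assms(4)] by blast
  ultimately show ?thesis using B(4) by simp
qed

lemma bd_add: "bd V (c + d) = bd V c + bd V d"
  by (auto simp: bd_def fun_eq_iff algebra_simps sum.distrib)

lemma bd_sc: "bd V (sc a c) = sc a (bd V c)"
  by (auto simp: bd_def fun_eq_iff sc_def sum_distrib_left algebra_simps)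

lemma bd_zero: "bd V (\<lambda>_. 0) = (\<lambda>_. (0::'k::field))"
  by (auto simp: bd_def)

lemma bd_nonzero:
  assumes "bd V c t \<noteq> 0"
  shows "\<exists>v\<in>V - t. c (insert v t) \<noteq> 0"
proof (rule ccontr)
  assume "\<not> ?thesis"
  then have "bd V c t = 0" unfolding bd_def by (intro sum.neutral) auto
  then show False using assms by simp
qed

lemma bd_chains:
  assumes K: "simplicial_complex K" and c: "c \<in> chains K (q + 1)"
  shows "bd V c \<in> chains K q"
  unfolding chains_def
proof (intro CollectI allI impI)
  fix t assume "bd V c t \<noteq> 0"
  then obtain v where v: "v \<in> V - t" "c (insert v t) \<noteq> 0" using bd_nonzero by blast
  then have "insert v t \<in> K" "int (card (insert v t)) = q + 1 + 1" using c unfolding chains_def by auto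
  moreover have "finite (insert v t)" using K calculation(1) unfolding simplicial_complex_def by blast
  ultimately show "t \<in> K \<and> int (card t) = q + 1"
    using K v unfolding simplicial_complex_def by (auto simp: card_insert_if)
qed

lemma chains_inf:
  assumes K: "simplicial_complex K" and c: "c \<in> chains K q" and s: "infinite s"
  shows "c s = 0"
  using assms unfolding simplicial_complex_def chains_def by blast

lemma cycles_sub_rb0:
  assumes K: "simplicial_complex (K :: 'v::linorder set set)"
    and rb: "reduced_betti TYPE('k::field) K q = 0"
  shows "cycles K q \<subseteq> (bounding K q :: ('v set \<Rightarrow> 'k) set)"
proof -
  interpret vector_space "sc :: 'k::field \<Rightarrow> ('v set \<Rightarrow> 'k) \<Rightarrow> ('v set \<Rightarrow> 'k)" by (rule vs_sc)
  have finK: "finite K" using K unfolding simplicial_complex_def by blast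
  have ch_sub: "subspace (chains K q' :: ('v set \<Rightarrow> 'k) set)" for q'
    unfolding chains_eq by (rule subspace_support)
  have linb: "Vector_Spaces.linear sc sc (boundary K :: ('v set \<Rightarrow> 'k) \<Rightarrow> _)"
    unfolding boundary_bd by (rule linear_scI) (auto simp: bd_add bd_sc)
  interpret L: Vector_Spaces.linear sc sc "boundary K :: ('v set \<Rightarrow> 'k) \<Rightarrow> _" by (rule linb)
  have Bsub: "subspace (bounding K q :: ('v set \<Rightarrow> 'k) set)"
    unfolding bounding_def by (rule L.subspace_image[OF ch_sub])
  have BZ: "bounding K q \<subseteq> (cycles K q :: ('v set \<Rightarrow> 'k) set)"
  proof
    fix x :: "'v set \<Rightarrow> 'k" assume "x \<in> bounding K q"
    then obtain c where c: "c \<in> chains K (q + 1)" "x = boundary K c" unfolding bounding_def by auto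
    have "x \<in> chains K q" using bd_chains[OF K c(1)] c(2) unfolding boundary_bd by simp
    moreover have "boundary K x = (\<lambda>_. 0)" unfolding c(2) boundary_bd
      by (rule bd_bd) (use K chains_inf[OF K c(1)] in \<open>auto simp: simplicial_complex_def\<close>)
    ultimately show "x \<in> cycles K q" unfolding cycles_def by simp
  qed
  have finZ: "fdim_in sc (cycles K q :: ('v set \<Rightarrow> 'k) set)"
  proof (rule fin_mono[OF fin_support[OF finK]])
    show "cycles K q \<subseteq> {c. \<forall>x. c x \<noteq> 0 \<longrightarrow> x \<in> K}" unfolding cycles_def chains_def by auto
  qed
  have "dim (cycles K q :: ('v set \<Rightarrow> 'k) set) \<le> dim (bounding K q :: ('v set \<Rightarrow> 'k) set)"
    using rb unfolding reduced_betti_def chain_scale_sc by simp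
  then show ?thesis by (rule subspace_dim_le_imp_subset[OF Bsub BZ finZ])
qed

definition AA :: "'v set set \<Rightarrow> (nat \<Rightarrow> 'v set set) \<Rightarrow> nat set \<Rightarrow> 'v set set" where
  "AA X A \<sigma> = (if \<sigma> = {} then X else inter_family A \<sigma>)"

definition DD :: "'v::linorder set set \<Rightarrow> (nat \<Rightarrow> 'v set set) \<Rightarrow> nat \<Rightarrow> int \<Rightarrow> int
    \<Rightarrow> (nat set \<times> 'v set \<Rightarrow> 'k::field) set" where
  "DD X A m p q = {c. \<forall>\<sigma> s. c (\<sigma>, s) \<noteq> 0 \<longrightarrow> \<sigma> \<in> nerve m A \<and> s \<in> AA X A \<sigma>
      \<and> int (card \<sigma>) = p + 1 \<and> int (card s) = q + 1}"

definition dH :: "nat \<Rightarrow> (nat set \<times> 'v::linorder set \<Rightarrow> 'k::field) \<Rightarrow> (nat set \<times> 'v set \<Rightarrow> 'k)" where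
  "dH m c = (\<lambda>(\<tau>, s). bd {0..<m} (\<lambda>\<sigma>. c (\<sigma>, s)) \<tau>)"

definition dV :: "'v::linorder set set \<Rightarrow> (nat set \<times> 'v set \<Rightarrow> 'k::field) \<Rightarrow> (nat set \<times> 'v set \<Rightarrow> 'k)" where
  "dV X c = (\<lambda>(\<sigma>, t). bd (\<Union>X) (\<lambda>s. c (\<sigma>, s)) t)"

locale cov =
  fixes X :: "'v::linorder set set" and A :: "nat \<Rightarrow> 'v set set" and m :: nat
  assumes X: "simplicial_complex X" and Asub: "\<forall>i<m. subcomplex (A i) X"
    and un: "(\<Union>i<m. A i) = X"
begin

lemma X_fin: "finite X" and X_empty: "{} \<in> X" and X_el_fin: "s \<in> X \<Longrightarrow> finite s"
  and X_down: "s \<in> X \<Longrightarrow> t \<subseteq> s \<Longrightarrow> t \<in> X"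
  using X unfolding simplicial_complex_def by blast+

lemma UX_fin: "finite (\<Union>X)" using X_fin X_el_fin by blast

lemma A_X: "i < m \<Longrightarrow> A i \<subseteq> X" using Asub unfolding subcomplex_def by blast
lemma A_cx: "i < m \<Longrightarrow> simplicial_complex (A i)" using Asub unfolding subcomplex_def by blast

lemma N_sub: "\<sigma> \<in> nerve m A \<Longrightarrow> \<sigma> \<subseteq> {0..<m}" unfolding nerve_def by blast
lemma N_fin_el: "\<sigma> \<in> nerve m A \<Longrightarrow> finite \<sigma>" using N_sub finite_subset by blast
lemma N_fin: "finite (nerve m A)"
  by (rule finite_subset[of _ "Pow {0..<m}"]) (auto simp: nerve_def)
lemma N_empty: "{} \<in> nerve m A" unfolding nerve_def by simp

lemma inter_mono: "\<tau> \<subseteq> \<sigma> \<Longrightarrow> \<tau> \<noteq> {} \<Longrightarrow> inter_family A \<sigma> \<subseteq> inter_family A \<tau>"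
  unfolding inter_family_def by blast

lemma N_down: "\<sigma> \<in> nerve m A \<Longrightarrow> \<tau> \<subseteq> \<sigma> \<Longrightarrow> \<tau> \<in> nerve m A"
proof -
  assume s: "\<sigma> \<in> nerve m A" "\<tau> \<subseteq> \<sigma>"
  show ?thesis
  proof (cases "\<tau> = {}")
    case True then show ?thesis by (simp add: nerve_def)
  next
    case False
    then have "\<sigma> \<noteq> {}" using s by auto
    then obtain f where f: "f \<in> inter_family A \<sigma>" "f \<noteq> {}" using s(1) unfolding nerve_def by blast
    have "f \<in> inter_family A \<tau>" using inter_mono[OF s(2) False] f(1) by blast
    moreover have "\<tau> \<subseteq> {0..<m}" using s unfolding nerve_def by blast
    ultimately show ?thesis using f(2) unfolding nerve_def by blast
  qed
qed

lemma N_cx: "simplicial_complex (nerve m A)"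
  unfolding simplicial_complex_def using N_fin N_empty N_fin_el N_down by blast

lemma AA_X: "\<sigma> \<in> nerve m A \<Longrightarrow> AA X A \<sigma> \<subseteq> X"
proof -
  assume s: "\<sigma> \<in> nerve m A"
  show ?thesis
  proof (cases "\<sigma> = {}")
    case False
    then obtain i where "i \<in> \<sigma>" by auto
    then have "i < m" using N_sub[OF s] by auto
    have "AA X A \<sigma> \<subseteq> A i" using False \<open>i \<in> \<sigma>\<close> unfolding AA_def inter_family_def by auto
    then show ?thesis using A_X[OF \<open>i < m\<close>] by blast
  qed (simp add: AA_def)
qed

lemma AA_inter: "\<sigma> \<noteq> {} \<Longrightarrow> AA X A \<sigma> = (\<Inter>i\<in>\<sigma>. A i)"
  unfolding AA_def inter_family_def by simp

lemma A_empty: "i < m \<Longrightarrow> {} \<in> A i"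
  using A_cx unfolding simplicial_complex_def by blast

lemma AA_empty: "\<sigma> \<in> nerve m A \<Longrightarrow> {} \<in> AA X A \<sigma>"
proof -
  assume s: "\<sigma> \<in> nerve m A"
  show ?thesis
  proof (cases "\<sigma> = {}")
    case True then show ?thesis using X_empty by (simp add: AA_def)
  next
    case False
    have "\<forall>i\<in>\<sigma>. {} \<in> A i" using N_sub[OF s] A_empty by auto
    then show ?thesis unfolding AA_inter[OF False] by blast
  qed
qed

lemma AA_down: "\<sigma> \<in> nerve m A \<Longrightarrow> s \<in> AA X A \<sigma> \<Longrightarrow> t \<subseteq> s \<Longrightarrow> t \<in> AA X A \<sigma>"
proof (cases "\<sigma> = {}")
  case True
  then show "s \<in> AA X A \<sigma> \<Longrightarrow> t \<subseteq> s \<Longrightarrow> t \<in> AA X A \<sigma>" using X_down by (simp add: AA_def)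
next
  case False
  assume "\<sigma> \<in> nerve m A" "s \<in> AA X A \<sigma>" "t \<subseteq> s"
  then show ?thesis using False N_sub A_cx unfolding AA_inter[OF False] simplicial_complex_def
    by (auto simp: subset_iff)
qed

lemma AA_cx: "\<sigma> \<in> nerve m A \<Longrightarrow> simplicial_complex (AA X A \<sigma>)"
  unfolding simplicial_complex_def using AA_X AA_empty AA_down X_fin X_el_fin
  by (meson finite_subset subsetD)

lemma AA_anti: "\<sigma> \<in> nerve m A \<Longrightarrow> \<tau> \<subseteq> \<sigma> \<Longrightarrow> AA X A \<sigma> \<subseteq> AA X A \<tau>"
proof -
  assume s: "\<sigma> \<in> nerve m A" "\<tau> \<subseteq> \<sigma>"
  show ?thesis
  proof (cases "\<tau> = {}")
    case True then show ?thesis using AA_X[OF s(1)] by (simp add: AA_def)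
  next
    case False
    then have "\<sigma> \<noteq> {}" using s by auto
    then show ?thesis using False s(2) unfolding AA_inter[OF False] AA_inter[OF \<open>\<sigma> \<noteq> {}\<close>] by blast
  qed
qed

lemma AA_insert:
  assumes s: "\<sigma> \<in> nerve m A" "s \<in> AA X A \<sigma>" "s \<noteq> {}" "a < m" "s \<in> A a"
  shows "insert a \<sigma> \<in> nerve m A \<and> s \<in> AA X A (insert a \<sigma>)"
proof -
  have "s \<in> AA X A (insert a \<sigma>)"
  proof (cases "\<sigma> = {}")
    case True then show ?thesis using assms by (simp add: AA_inter)
  next
    case False then show ?thesis using assms by (simp add: AA_inter)
  qed
  moreover have "insert a \<sigma> \<subseteq> {0..<m}" using N_sub[OF s(1)] s(4) by auto
  ultimately show ?thesis using s(3) unfolding nerve_def AA_def by auto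
qed

lemma DD_iff: "c \<in> DD X A m p q \<longleftrightarrow> (\<forall>\<sigma> s. c (\<sigma>, s) \<noteq> 0 \<longrightarrow> \<sigma> \<in> nerve m A \<and> s \<in> AA X A \<sigma>
      \<and> int (card \<sigma>) = p + 1 \<and> int (card s) = q + 1)"
  unfolding DD_def by simp

lemma DD_eq: "DD X A m p q = {c. \<forall>z. c z \<noteq> 0 \<longrightarrow> (case z of (\<sigma>, s) \<Rightarrow> \<sigma> \<in> nerve m A \<and> s \<in> AA X A \<sigma>
      \<and> int (card \<sigma>) = p + 1 \<and> int (card s) = q + 1)}"
  unfolding DD_def by auto

lemma DD_sub: "module.subspace sc (DD X A m p q)"
  unfolding DD_eq by (rule subspace_support)

lemma DD_fin: "fdim_in sc (DD X A m p q :: (nat set \<times> 'v set \<Rightarrow> 'k::field) set)"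
proof -
  interpret vector_space "sc :: 'k::field \<Rightarrow> (nat set \<times> 'v set \<Rightarrow> 'k) \<Rightarrow> _" by (rule vs_sc)
  have "finite (nerve m A \<times> X)" using N_fin X_fin by simp
  note f = fin_support[OF this]
  show ?thesis
    by (rule fin_mono[OF f]) (auto simp: DD_iff dest!: spec2 intro: subsetD[OF AA_X])
qed

lemma lin_dH: "Vector_Spaces.linear sc sc (dH m :: (nat set \<times> 'v set \<Rightarrow> 'k::field) \<Rightarrow> _)"
proof (rule linear_scI)
  fix x y :: "nat set \<times> 'v set \<Rightarrow> 'k"
  show "dH m (x + y) = dH m x + dH m y"
    unfolding dH_def by (auto simp: fun_eq_iff bd_def sum.distrib algebra_simps)
  fix a
  show "dH m (sc a x) = sc a (dH m x)"
    unfolding dH_def by (auto simp: fun_eq_iff bd_def sc_def sum_distrib_left algebra_simps)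
qed

lemma lin_dV: "Vector_Spaces.linear sc sc (dV X :: (nat set \<times> 'v set \<Rightarrow> 'k::field) \<Rightarrow> _)"
proof (rule linear_scI)
  fix x y :: "nat set \<times> 'v set \<Rightarrow> 'k"
  show "dV X (x + y) = dV X x + dV X y"
    unfolding dV_def by (auto simp: fun_eq_iff bd_def sum.distrib algebra_simps)
  fix a
  show "dV X (sc a x) = sc a (dV X x)"
    unfolding dV_def by (auto simp: fun_eq_iff bd_def sc_def sum_distrib_left algebra_simps)
qed

lemma dH_D:
  assumes x: "x \<in> DD X A m p q"
  shows "dH m x \<in> DD X A m (p - 1) q"
  unfolding DD_iff
proof (intro allI impI)
  fix \<tau> s assume "dH m x (\<tau>, s) \<noteq> 0"
  then have "bd {0..<m} (\<lambda>\<sigma>. x (\<sigma>, s)) \<tau> \<noteq> 0" unfolding dH_def by simp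
  then obtain i where i: "i \<in> {0..<m} - \<tau>" "x (insert i \<tau>, s) \<noteq> 0" using bd_nonzero by blast
  then have h: "insert i \<tau> \<in> nerve m A" "s \<in> AA X A (insert i \<tau>)" "int (card (insert i \<tau>)) = p + 1"
    "int (card s) = q + 1" using x unfolding DD_iff by blast+
  have "finite \<tau>" using N_fin_el[OF h(1)] by simp
  then show "\<tau> \<in> nerve m A \<and> s \<in> AA X A \<tau> \<and> int (card \<tau>) = p - 1 + 1 \<and> int (card s) = q + 1"
    using h N_down[OF h(1)] AA_anti[OF h(1)] i by auto
qed

lemma dV_D:
  assumes x: "x \<in> DD X A m p q"
  shows "dV X x \<in> DD X A m p (q - 1)"
  unfolding DD_iff
proof (intro allI impI)
  fix \<sigma> t assume "dV X x (\<sigma>, t) \<noteq> 0"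
  then have "bd (\<Union>X) (\<lambda>s. x (\<sigma>, s)) t \<noteq> 0" unfolding dV_def by simp
  then obtain v where v: "v \<in> \<Union>X - t" "x (\<sigma>, insert v t) \<noteq> 0" using bd_nonzero by blast
  then have h: "\<sigma> \<in> nerve m A" "insert v t \<in> AA X A \<sigma>" "int (card \<sigma>) = p + 1"
    "int (card (insert v t)) = q + 1" using x unfolding DD_iff by blast+
  have "insert v t \<in> X" using AA_X[OF h(1)] h(2) by blast
  then have "finite (insert v t)" by (rule X_el_fin)
  then have "finite t" by simp
  then have "card (insert v t) = Suc (card t)" using v(1) by simp
  then show "\<sigma> \<in> nerve m A \<and> t \<in> AA X A \<sigma> \<and> int (card \<sigma>) = p + 1 \<and> int (card t) = q - 1 + 1"
    using h(1,3,4) AA_down[OF h(1) h(2)] by auto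
qed

lemma DD_inf1: "x \<in> DD X A m p q \<Longrightarrow> infinite \<sigma> \<Longrightarrow> x (\<sigma>, s) = 0"
  using N_fin_el unfolding DD_iff by blast

lemma DD_inf2: "x \<in> DD X A m p q \<Longrightarrow> infinite s \<Longrightarrow> x (\<sigma>, s) = 0"
  using AA_X X_el_fin unfolding DD_iff by blast

lemma hh: "x \<in> DD X A m p q \<Longrightarrow> dH m (dH m x) = 0"
proof -
  assume x: "x \<in> DD X A m p q"
  show ?thesis
  proof
    fix z :: "nat set \<times> 'v set"
    obtain \<tau> s where z: "z = (\<tau>, s)" by (cases z)
    have "dH m (dH m x) z = bd {0..<m} (bd {0..<m} (\<lambda>\<sigma>. x (\<sigma>, s))) \<tau>"
      unfolding z dH_def by simp
    also have "\<dots> = 0" by (subst bd_bd) (use DD_inf1[OF x] in auto)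
    finally show "dH m (dH m x) z = 0 z" by simp
  qed
qed

lemma vv: "x \<in> DD X A m p q \<Longrightarrow> dV X (dV X x) = 0"
proof -
  assume x: "x \<in> DD X A m p q"
  show ?thesis
  proof
    fix z :: "nat set \<times> 'v set"
    obtain \<sigma> t where z: "z = (\<sigma>, t)" by (cases z)
    have "dV X (dV X x) z = bd (\<Union>X) (bd (\<Union>X) (\<lambda>s. x (\<sigma>, s))) t"
      unfolding z dV_def by simp
    also have "\<dots> = 0" by (subst bd_bd) (use DD_inf2[OF x] UX_fin in auto)
    finally show "dV X (dV X x) z = 0 z" by simp
  qed
qed

lemma comm: "dH m (dV X x) = dV X (dH m x)"
proof
  fix z :: "nat set \<times> 'v set"
  obtain \<tau> t where z: "z = (\<tau>, t)" by (cases z)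
  show "dH m (dV X x) z = dV X (dH m x) z"
    unfolding z dH_def dV_def bd_def
    by (simp add: sum_distrib_left mult.left_commute sum.swap[of _ "{0..<m} - \<tau>"])
qed

lemma dh0: "x \<in> DD X A m (-1) q \<Longrightarrow> dH m x = 0"
proof
  fix z :: "nat set \<times> 'v set"
  assume x: "x \<in> DD X A m (-1) q"
  obtain \<tau> s where z: "z = (\<tau>, s)" by (cases z)
  have "x (insert i \<tau>, s) = 0" for i
  proof (rule ccontr)
    assume "x (insert i \<tau>, s) \<noteq> 0"
    then have "insert i \<tau> \<in> nerve m A" "int (card (insert i \<tau>)) = 0" using x unfolding DD_iff by auto
    then show False using N_fin_el[of "insert i \<tau>"] by (simp add: card_0_eq)
  qed
  then show "dH m x z = 0 z" unfolding z dH_def bd_def by simp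
qed

end

definition embX :: "('v set \<Rightarrow> 'k::field) \<Rightarrow> (nat set \<times> 'v set \<Rightarrow> 'k)" where
  "embX c = (\<lambda>(\<sigma>, s). if \<sigma> = {} then c s else 0)"

definition embN :: "(nat set \<Rightarrow> 'k::field) \<Rightarrow> (nat set \<times> 'v set \<Rightarrow> 'k)" where
  "embN c = (\<lambda>(\<sigma>, s). if s = {} then c \<sigma> else 0)"

lemma embX_lin: "Vector_Spaces.linear sc sc (embX :: ('v set \<Rightarrow> 'k::field) \<Rightarrow> _)"
  by (rule linear_scI) (auto simp: embX_def sc_def fun_eq_iff)

lemma embN_lin: "Vector_Spaces.linear sc sc (embN :: (nat set \<Rightarrow> 'k::field) \<Rightarrow> (nat set \<times> 'v set \<Rightarrow> 'k))"
  by (rule linear_scI) (auto simp: embN_def sc_def fun_eq_iff)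

lemma embX_inj: "inj (embX :: ('v set \<Rightarrow> 'k::field) \<Rightarrow> _)"
proof (rule injI)
  fix c d :: "'v set \<Rightarrow> 'k" assume "embX c = embX d"
  then have "\<And>s. embX c ({}, s) = embX d ({}, s)" by simp
  then show "c = d" by (auto simp: embX_def fun_eq_iff)
qed

lemma embN_inj: "inj (embN :: (nat set \<Rightarrow> 'k::field) \<Rightarrow> (nat set \<times> 'v set \<Rightarrow> 'k))"
proof (rule injI)
  fix c d :: "nat set \<Rightarrow> 'k" assume "(embN c :: nat set \<times> 'v set \<Rightarrow> 'k) = embN d"
  then have "\<And>\<sigma>. (embN c :: nat set \<times> 'v set \<Rightarrow> 'k) (\<sigma>, {}) = (embN d :: nat set \<times> 'v set \<Rightarrow> 'k) (\<sigma>, {})"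
    by simp
  then show "c = d" by (auto simp: embN_def fun_eq_iff)
qed

lemma embX_0: "embX c = 0 \<longleftrightarrow> c = 0"
proof
  assume "embX c = 0"
  then have "\<And>s. embX c ({}, s) = 0" by simp
  then show "c = 0" by (auto simp: embX_def fun_eq_iff)
qed (auto simp: embX_def fun_eq_iff)

lemma embN_0: "(embN c :: nat set \<times> 'v set \<Rightarrow> 'k::field) = 0 \<longleftrightarrow> c = 0"
proof
  assume "(embN c :: nat set \<times> 'v set \<Rightarrow> 'k) = 0"
  then have "\<And>\<sigma>. (embN c :: nat set \<times> 'v set \<Rightarrow> 'k) (\<sigma>, {}) = 0" by simp
  then show "c = 0" by (auto simp: embN_def fun_eq_iff)
qed (auto simp: embN_def fun_eq_iff)

context cov
begin

definition ap :: "'v set \<Rightarrow> nat" where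
  "ap s = (LEAST i. i < m \<and> s \<in> A i)"

lemma ap:
  assumes "s \<in> X"
  shows "ap s < m \<and> s \<in> A (ap s)"
proof -
  have "\<exists>i. i < m \<and> s \<in> A i" using assms un by blast
  then show ?thesis unfolding ap_def by (rule LeastI_ex)
qed

lemma R_conc:
  fixes x :: "nat set \<times> 'v set \<Rightarrow> 'k::field"
  assumes q: "0 \<le> q" and x: "x \<in> DD X A m p q" and dx: "dH m x = 0"
  shows "x \<in> dH m ` DD X A m (p + 1) q"
proof -
  define h where "h = (\<lambda>(\<sigma>, s). hc (ap s) (\<lambda>\<sigma>'. x (\<sigma>', s)) \<sigma>)"
  have apx: "ap s < m \<and> s \<in> A (ap s) \<and> s \<noteq> {}" if nz: "x (\<sigma>, s) \<noteq> 0" for \<sigma> s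
  proof -
    have h1: "\<sigma> \<in> nerve m A" "s \<in> AA X A \<sigma>" "int (card s) = q + 1" using x nz unfolding DD_iff by blast+
    have "s \<noteq> {}" using h1(3) q by auto
    moreover have "s \<in> X" using AA_X[OF h1(1)] h1(2) by blast
    ultimately show ?thesis using ap by blast
  qed
  have hD: "h \<in> DD X A m (p + 1) q"
    unfolding DD_iff
  proof (intro allI impI)
    fix \<sigma> s assume nz: "h (\<sigma>, s) \<noteq> 0"
    define a where "a = ap s"
    have aa: "a \<in> \<sigma>" "x (\<sigma> - {a}, s) \<noteq> 0" using nz unfolding h_def hc_def a_def by (auto split: if_splits)
    have h1: "\<sigma> - {a} \<in> nerve m A" "s \<in> AA X A (\<sigma> - {a})" "int (card (\<sigma> - {a})) = p + 1" "int (card s) = q + 1"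
      using x aa(2) unfolding DD_iff by blast+
    have ap1: "a < m" "s \<in> A a" "s \<noteq> {}" using apx[OF aa(2)] unfolding a_def by auto
    have "insert a (\<sigma> - {a}) \<in> nerve m A \<and> s \<in> AA X A (insert a (\<sigma> - {a}))"
      by (rule AA_insert[OF h1(1) h1(2) ap1(3) ap1(1) ap1(2)])
    moreover have "insert a (\<sigma> - {a}) = \<sigma>" using aa(1) by auto
    moreover have "card \<sigma> = Suc (card (\<sigma> - {a}))"
      using aa(1) N_fin_el[OF h1(1)] by (metis card.insert Diff_iff calculation(2) singletonI)
    ultimately show "\<sigma> \<in> nerve m A \<and> s \<in> AA X A \<sigma> \<and> int (card \<sigma>) = p + 1 + 1 \<and> int (card s) = q + 1"
      using h1 by auto
  qed
  have "dH m h = x"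
  proof
    fix z :: "nat set \<times> 'v set"
    obtain \<tau> s where z: "z = (\<tau>, s)" by (cases z)
    have e: "(\<lambda>\<sigma>. h (\<sigma>, s)) = hc (ap s) (\<lambda>\<sigma>'. x (\<sigma>', s))" unfolding h_def by simp
    show "dH m h z = x z"
    proof (cases "\<exists>\<sigma>. x (\<sigma>, s) \<noteq> 0")
      case True
      then obtain \<sigma> where "x (\<sigma>, s) \<noteq> 0" by blast
      then have apm: "ap s \<in> {0..<m}" using apx by auto
      have cyc: "bd {0..<m} (\<lambda>\<sigma>'. x (\<sigma>', s)) = (\<lambda>_. 0)"
      proof
        fix t
        have "dH m x (t, s) = 0" using dx by simp
        then show "bd {0..<m} (\<lambda>\<sigma>'. x (\<sigma>', s)) t = 0" unfolding dH_def by simp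
      qed
      have "bd {0..<m} (hc (ap s) (\<lambda>\<sigma>'. x (\<sigma>', s))) = (\<lambda>\<sigma>'. x (\<sigma>', s))"
        by (rule cone[OF _ apm _ cyc]) (use DD_inf1[OF x] in auto)
      then show ?thesis unfolding z dH_def using e by (simp add: fun_eq_iff)
    next
      case False
      then have "(\<lambda>\<sigma>'. x (\<sigma>', s)) = (\<lambda>_. 0)" by auto
      moreover have "hc a (\<lambda>_. 0) = (\<lambda>_. (0::'k))" for a :: nat by (auto simp: hc_def)
      ultimately show ?thesis unfolding z dH_def using e False by (simp add: bd_zero)
    qed
  qed
  then show ?thesis using hD by blast
qed

lemma CC_conc:
  assumes H: "\<forall>\<sigma>\<in>nerve m A. 1 \<le> card \<sigma> \<and> card \<sigma> \<le> k + 1 \<longrightarrow>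
           reduced_betti TYPE('k::field) (inter_family A \<sigma>) (int k - int (card \<sigma>) + 1) = 0"
    and p: "0 \<le> p" "p \<le> int k"
    and x: "x \<in> (DD X A m p (int k - p) :: (nat set \<times> 'v set \<Rightarrow> 'k) set)" and dx: "dV X x = 0"
  shows "x \<in> dV X ` DD X A m p (int k - p + 1)"
proof -
  have cyc: "\<exists>b \<in> chains (AA X A \<sigma>) (int k - p + 1). boundary (AA X A \<sigma>) b = (\<lambda>s. x (\<sigma>, s))"
    if \<sigma>: "\<sigma> \<in> nerve m A" "int (card \<sigma>) = p + 1" for \<sigma>
  proof -
    have ne: "\<sigma> \<noteq> {}" using \<sigma>(2) p by auto
    have AAe: "AA X A \<sigma> = inter_family A \<sigma>" using ne by (simp add: AA_def)
    have "1 \<le> card \<sigma> \<and> card \<sigma> \<le> k + 1" using \<sigma>(2) p by auto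
    then have rb: "reduced_betti TYPE('k) (AA X A \<sigma>) (int k - p) = 0"
      using H \<sigma> AAe by auto
    have sub: "cycles (AA X A \<sigma>) (int k - p) \<subseteq> (bounding (AA X A \<sigma>) (int k - p) :: ('v set \<Rightarrow> 'k) set)"
      by (rule cycles_sub_rb0[OF AA_cx[OF \<sigma>(1)] rb])
    have ch: "(\<lambda>s. x (\<sigma>, s)) \<in> chains (AA X A \<sigma>) (int k - p)"
      using x unfolding chains_def DD_iff by auto
    have "boundary (AA X A \<sigma>) (\<lambda>s. x (\<sigma>, s)) = bd (\<Union>X) (\<lambda>s. x (\<sigma>, s))"
      unfolding boundary_bd
      by (rule bd_cong_V[symmetric]) (use AA_X[OF \<sigma>(1)] UX_fin ch in \<open>auto simp: chains_def\<close>)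
    also have "\<dots> = (\<lambda>_. 0)"
    proof
      fix t
      have "dV X x (\<sigma>, t) = 0" using dx by simp
      then show "bd (\<Union>X) (\<lambda>s. x (\<sigma>, s)) t = 0" unfolding dV_def by simp
    qed
    finally have "(\<lambda>s. x (\<sigma>, s)) \<in> cycles (AA X A \<sigma>) (int k - p)" using ch unfolding cycles_def by simp
    then have "(\<lambda>s. x (\<sigma>, s)) \<in> bounding (AA X A \<sigma>) (int k - p)" using sub by blast
    then show ?thesis unfolding bounding_def by auto
  qed
  define bb where "bb \<sigma> = (SOME b. b \<in> chains (AA X A \<sigma>) (int k - p + 1)
      \<and> boundary (AA X A \<sigma>) b = (\<lambda>s. x (\<sigma>, s)))" for \<sigma>
  have bb: "bb \<sigma> \<in> chains (AA X A \<sigma>) (int k - p + 1) \<and> boundary (AA X A \<sigma>) (bb \<sigma>) = (\<lambda>s. x (\<sigma>, s))"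
    if "\<sigma> \<in> nerve m A" "int (card \<sigma>) = p + 1" for \<sigma>
  proof -
    have ex: "\<exists>b. b \<in> chains (AA X A \<sigma>) (int k - p + 1) \<and> boundary (AA X A \<sigma>) b = (\<lambda>s. x (\<sigma>, s))"
      using cyc[OF that] by blast
    show ?thesis unfolding bb_def by (rule someI_ex[OF ex])
  qed
  define B where "B = (\<lambda>(\<sigma>, s). if \<sigma> \<in> nerve m A \<and> int (card \<sigma>) = p + 1 then bb \<sigma> s else 0)"
  have BD: "B \<in> DD X A m p (int k - p + 1)"
    unfolding DD_iff
  proof (intro allI impI)
    fix \<sigma> s assume nz: "B (\<sigma>, s) \<noteq> 0"
    then have c: "\<sigma> \<in> nerve m A" "int (card \<sigma>) = p + 1" "bb \<sigma> s \<noteq> 0" unfolding B_def by (auto split: if_splits)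
    then show "\<sigma> \<in> nerve m A \<and> s \<in> AA X A \<sigma> \<and> int (card \<sigma>) = p + 1 \<and> int (card s) = int k - p + 1 + 1"
      using bb[OF c(1) c(2)] unfolding chains_def by auto
  qed
  have "dV X B = x"
  proof
    fix z :: "nat set \<times> 'v set"
    obtain \<sigma> t where z: "z = (\<sigma>, t)" by (cases z)
    show "dV X B z = x z"
    proof (cases "\<sigma> \<in> nerve m A \<and> int (card \<sigma>) = p + 1")
      case True
      have e: "(\<lambda>s. B (\<sigma>, s)) = bb \<sigma>" unfolding B_def using True by simp
      have "bd (\<Union>X) (bb \<sigma>) = bd (\<Union>(AA X A \<sigma>)) (bb \<sigma>)"
        by (rule bd_cong_V) (use AA_X True UX_fin bb[of \<sigma>] in \<open>auto simp: chains_def\<close>)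
      also have "\<dots> = (\<lambda>s. x (\<sigma>, s))" using bb[of \<sigma>] True boundary_bd by metis
      finally show ?thesis unfolding z dV_def using e by simp
    next
      case False
      have e: "(\<lambda>s. B (\<sigma>, s)) = (\<lambda>_. 0)" unfolding B_def using False by auto
      have "x (\<sigma>, t) = 0" using x False unfolding DD_iff by blast
      then show ?thesis unfolding z dV_def using e by (simp add: bd_zero)
    qed
  qed
  then show ?thesis using BD by blast
qed

lemma CC'_conc:
  assumes x: "x \<in> (DD X A m (int k + 1) (-1) :: (nat set \<times> 'v set \<Rightarrow> 'k::field) set)"
  shows "x \<in> dV X ` DD X A m (int k + 1) 0"
proof -
  have vex: "\<exists>v. {v} \<in> AA X A \<sigma>" if sn: "\<sigma> \<in> nerve m A" "\<sigma> \<noteq> {}" for \<sigma>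
  proof -
    obtain f where f: "f \<in> inter_family A \<sigma>" "f \<noteq> {}" using sn unfolding nerve_def by blast
    then obtain v where "v \<in> f" by blast
    then have "{v} \<subseteq> f" by simp
    moreover have "f \<in> AA X A \<sigma>" using f sn by (simp add: AA_def)
    ultimately show ?thesis using AA_down[OF sn(1)] by blast
  qed
  define vx where "vx \<sigma> = (SOME v. {v} \<in> AA X A \<sigma>)" for \<sigma>
  have vx: "{vx \<sigma>} \<in> AA X A \<sigma>" if "\<sigma> \<in> nerve m A" "\<sigma> \<noteq> {}" for \<sigma>
    unfolding vx_def by (rule someI_ex[OF vex[OF that]])
  define cond where "cond \<sigma> \<longleftrightarrow> \<sigma> \<in> nerve m A \<and> int (card \<sigma>) = int k + 1 + 1" for \<sigma>
  have cond_ne: "cond \<sigma> \<Longrightarrow> \<sigma> \<noteq> {}" for \<sigma> unfolding cond_def by auto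
  define B where "B = (\<lambda>(\<sigma>, s). if cond \<sigma> \<and> s = {vx \<sigma>} then x (\<sigma>, {}) else 0)"
  have BD: "B \<in> DD X A m (int k + 1) 0"
    unfolding DD_iff
  proof (intro allI impI)
    fix \<sigma> s assume nz: "B (\<sigma>, s) \<noteq> 0"
    then have c: "cond \<sigma>" "s = {vx \<sigma>}" unfolding B_def by (auto split: if_splits)
    then show "\<sigma> \<in> nerve m A \<and> s \<in> AA X A \<sigma> \<and> int (card \<sigma>) = int k + 1 + 1 \<and> int (card s) = 0 + 1"
      using vx[of \<sigma>] cond_ne[OF c(1)] unfolding cond_def by auto
  qed
  have "dV X B = x"
  proof
    fix z :: "nat set \<times> 'v set"
    obtain \<sigma> t where z: "z = (\<sigma>, t)" by (cases z)
    show "dV X B z = x z"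
    proof (cases "cond \<sigma>")
      case False
      have e: "(\<lambda>s. B (\<sigma>, s)) = (\<lambda>_. 0)" unfolding B_def using False by simp
      have "x (\<sigma>, t) = 0" using x False unfolding DD_iff cond_def by blast
      then show ?thesis unfolding z dV_def using e by (simp add: bd_zero)
    next
      case True
      have vxX: "vx \<sigma> \<in> \<Union>X" using vx[of \<sigma>] True cond_ne AA_X unfolding cond_def by blast
      show ?thesis
      proof (cases "t = {}")
        case True': True
        have "dV X B z = (\<Sum>v\<in>\<Union>X. sg v {} * B (\<sigma>, {v}))" unfolding z dV_def bd_def True' by simp
        also have "\<dots> = (\<Sum>v\<in>\<Union>X. if v = vx \<sigma> then x (\<sigma>, {}) else 0)"
          by (rule sum.cong) (use True in \<open>auto simp: B_def sg_def\<close>)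
        also have "\<dots> = x (\<sigma>, {})" using vxX UX_fin by (simp add: sum.delta')
        finally show ?thesis unfolding z True' .
      next
        case False
        have "B (\<sigma>, insert v t) = 0" if "v \<notin> t" for v
        proof -
          have "insert v t \<noteq> {vx \<sigma>}" using False that by auto
          then show ?thesis unfolding B_def by auto
        qed
        then have "dV X B z = 0" unfolding z dV_def bd_def by simp
        moreover have "x (\<sigma>, t) = 0"
        proof (rule ccontr)
          assume "x (\<sigma>, t) \<noteq> 0"
          then have "t \<in> AA X A \<sigma>" "\<sigma> \<in> nerve m A" "int (card t) = 0" using x unfolding DD_iff by auto
          then show False using False AA_X X_el_fin by fastforce
        qed
        ultimately show ?thesis unfolding z by simp
      qed
    qed
  qed
  then show ?thesis using BD by blast
qed

lemma DD_X: "DD X A m (-1) q = (embX ` chains X q :: (nat set \<times> 'v set \<Rightarrow> 'k::field) set)"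
proof (intro equalityI subsetI)
  fix x :: "nat set \<times> 'v set \<Rightarrow> 'k" assume x: "x \<in> DD X A m (-1) q"
  define c where "c = (\<lambda>s. x ({}, s))"
  have "c \<in> chains X q" unfolding chains_def
  proof (intro CollectI allI impI)
    fix s assume "c s \<noteq> 0"
    then have "x ({}, s) \<noteq> 0" by (simp add: c_def)
    then have "s \<in> AA X A {}" "int (card s) = q + 1" using x unfolding DD_iff by blast+
    then show "s \<in> X \<and> int (card s) = q + 1" by (simp add: AA_def)
  qed
  moreover have "x = embX c"
  proof
    fix z :: "nat set \<times> 'v set"
    obtain \<sigma> s where z: "z = (\<sigma>, s)" by (cases z)
    show "x z = embX c z"
    proof (cases "\<sigma> = {}")
      case False
      have "x (\<sigma>, s) = 0"
      proof (rule ccontr)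
        assume "x (\<sigma>, s) \<noteq> 0"
        then have "\<sigma> \<in> nerve m A" "int (card \<sigma>) = 0" using x unfolding DD_iff by auto
        then show False using False N_fin_el by auto
      qed
      then show ?thesis using False unfolding z embX_def by simp
    qed (simp add: z embX_def c_def)
  qed
  ultimately show "x \<in> embX ` chains X q" by blast
next
  fix x :: "nat set \<times> 'v set \<Rightarrow> 'k" assume "x \<in> embX ` chains X q"
  then obtain c where c: "c \<in> chains X q" "x = embX c" by blast
  show "x \<in> DD X A m (-1) q" unfolding DD_iff
  proof (intro allI impI)
    fix \<sigma> s assume "x (\<sigma>, s) \<noteq> 0"
    then have "\<sigma> = {}" "c s \<noteq> 0" using c(2) unfolding embX_def by (auto split: if_splits)
    then show "\<sigma> \<in> nerve m A \<and> s \<in> AA X A \<sigma> \<and> int (card \<sigma>) = -1 + 1 \<and> int (card s) = q + 1"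
      using c(1) N_empty unfolding chains_def AA_def by auto
  qed
qed

lemma dV_embX: "dV X (embX c) = embX (boundary X c)"
proof
  fix z :: "nat set \<times> 'v set"
  obtain \<sigma> t where z: "z = (\<sigma>, t)" by (cases z)
  show "dV X (embX c) z = embX (boundary X c) z"
  proof (cases "\<sigma> = {}")
    case True
    then show ?thesis unfolding z dV_def embX_def boundary_bd by simp
  next
    case False
    then have "(\<lambda>s. embX c (\<sigma>, s)) = (\<lambda>_. 0)" unfolding embX_def by simp
    then show ?thesis using False unfolding z dV_def embX_def by (simp add: bd_zero)
  qed
qed

lemma DD_N: "DD X A m p (-1) = (embN ` chains (nerve m A) p :: (nat set \<times> 'v set \<Rightarrow> 'k::field) set)"
proof (intro equalityI subsetI)
  fix x :: "nat set \<times> 'v set \<Rightarrow> 'k" assume x: "x \<in> DD X A m p (-1)"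
  define c where "c = (\<lambda>\<sigma>. x (\<sigma>, {}))"
  have "c \<in> chains (nerve m A) p" unfolding chains_def
  proof (intro CollectI allI impI)
    fix \<sigma> assume "c \<sigma> \<noteq> 0"
    then have "x (\<sigma>, {}) \<noteq> 0" by (simp add: c_def)
    then show "\<sigma> \<in> nerve m A \<and> int (card \<sigma>) = p + 1" using x unfolding DD_iff by blast
  qed
  moreover have "x = embN c"
  proof
    fix z :: "nat set \<times> 'v set"
    obtain \<sigma> s where z: "z = (\<sigma>, s)" by (cases z)
    show "x z = embN c z"
    proof (cases "s = {}")
      case False
      have "x (\<sigma>, s) = 0"
      proof (rule ccontr)
        assume "x (\<sigma>, s) \<noteq> 0"
        then have "\<sigma> \<in> nerve m A" "s \<in> AA X A \<sigma>" "int (card s) = 0" using x unfolding DD_iff by auto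
        then show False using False AA_X X_el_fin by fastforce
      qed
      then show ?thesis using False unfolding z embN_def by simp
    qed (simp add: z embN_def c_def)
  qed
  ultimately show "x \<in> embN ` chains (nerve m A) p" by blast
next
  fix x :: "nat set \<times> 'v set \<Rightarrow> 'k" assume "x \<in> embN ` chains (nerve m A) p"
  then obtain c where c: "c \<in> chains (nerve m A) p" "x = embN c" by blast
  show "x \<in> DD X A m p (-1)" unfolding DD_iff
  proof (intro allI impI)
    fix \<sigma> s assume "x (\<sigma>, s) \<noteq> 0"
    then have "s = {}" "c \<sigma> \<noteq> 0" using c(2) unfolding embN_def by (auto split: if_splits)
    then show "\<sigma> \<in> nerve m A \<and> s \<in> AA X A \<sigma> \<and> int (card \<sigma>) = p + 1 \<and> int (card s) = -1 + 1"
      using c(1) AA_empty unfolding chains_def by auto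
  qed
qed

lemma dH_embN:
  assumes c: "c \<in> chains (nerve m A) p"
  shows "(dH m (embN c) :: nat set \<times> 'v set \<Rightarrow> 'k::field) = embN (boundary (nerve m A) c)"
proof
  fix z :: "nat set \<times> 'v set"
  obtain \<tau> s where z: "z = (\<tau>, s)" by (cases z)
  show "(dH m (embN c) :: nat set \<times> 'v set \<Rightarrow> 'k) z = embN (boundary (nerve m A) c) z"
  proof (cases "s = {}")
    case True
    have "bd {0..<m} c = bd (\<Union>(nerve m A)) c"
      by (rule bd_cong_V) (use N_sub c in \<open>auto simp: chains_def\<close>)
    then show ?thesis unfolding z dH_def embN_def boundary_bd using True by simp
  next
    case False
    then have "(\<lambda>\<sigma>. (embN c :: nat set \<times> 'v set \<Rightarrow> 'k) (\<sigma>, s)) = (\<lambda>_. 0)" unfolding embN_def by simp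
    then show ?thesis using False unfolding z dH_def embN_def by (simp add: bd_zero)
  qed
qed

lemma final:
  assumes H: "\<forall>\<sigma>\<in>nerve m A. 1 \<le> card \<sigma> \<and> card \<sigma> \<le> k + 1 \<longrightarrow>
           reduced_betti TYPE('k::field) (inter_family A \<sigma>) (int k - int (card \<sigma>) + 1) = 0"
  shows "reduced_betti TYPE('k) (nerve m A) (int k + 1) \<le> reduced_betti TYPE('k) X (int k + 1)
         \<and> reduced_betti TYPE('k) X (int k) \<le> reduced_betti TYPE('k) (nerve m A) (int k)"
proof -
  interpret D: dcx sc "DD X A m :: int \<Rightarrow> int \<Rightarrow> (nat set \<times> 'v set \<Rightarrow> 'k) set" "dH m" "dV X"
    by (rule dcx.intro[OF vs_sc], unfold dcx_axioms_def)
      (intro conjI allI impI; auto intro: DD_sub DD_fin lin_dH lin_dV dH_D dV_D hh vv comm dh0 R_conc)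
  have CC: "D.CC k" unfolding D.CC_def using CC_conc[OF H] by blast
  have CC': "D.CC' k" unfolding D.CC'_def using CC'_conc by blast
  note M = D.main[OF CC CC']
  let ?dX = "vector_space.dim (sc :: 'k \<Rightarrow> ('v set \<Rightarrow> 'k) \<Rightarrow> _)"
  let ?dN = "vector_space.dim (sc :: 'k \<Rightarrow> (nat set \<Rightarrow> 'k) \<Rightarrow> _)"
  have dX: "D.dim (embX ` S) = ?dX S" for S :: "('v set \<Rightarrow> 'k) set"
    by (rule dim_inj_image[OF vs_sc vs_sc embX_lin embX_inj])
  have dN: "D.dim ((embN :: (nat set \<Rightarrow> 'k) \<Rightarrow> (nat set \<times> 'v set \<Rightarrow> 'k)) ` S) = ?dN S" for S
    by (rule dim_inj_image[OF vs_sc vs_sc embN_lin embN_inj])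
  have ZvX: "D.Zv (-1) q = embX ` cycles X q" for q
  proof -
    have "D.Zv (-1) q = {x \<in> embX ` chains X q. dV X x = 0}" unfolding D.Zv_def DD_X ..
    also have "\<dots> = embX ` cycles X q"
    proof (intro equalityI subsetI)
      fix x :: "nat set \<times> 'v set \<Rightarrow> 'k" assume "x \<in> {x \<in> embX ` chains X q. dV X x = 0}"
      then obtain c where c: "c \<in> chains X q" "x = embX c" "dV X x = 0" by blast
      then have "embX (boundary X c) = 0" using dV_embX[of c] by simp
      then have "boundary X c = 0" by (simp add: embX_0)
      then have "c \<in> cycles X q" using c(1) unfolding cycles_def by (simp add: zero_fun_def)
      then show "x \<in> embX ` cycles X q" using c(2) by blast
    next
      fix x :: "nat set \<times> 'v set \<Rightarrow> 'k" assume "x \<in> embX ` cycles X q"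
      then obtain c where c: "c \<in> cycles X q" "x = embX c" by blast
      then have "boundary X c = 0" "c \<in> chains X q" unfolding cycles_def by (auto simp: zero_fun_def)
      then show "x \<in> {x \<in> embX ` chains X q. dV X x = 0}" using c(2) dV_embX[of c] embX_0 by auto
    qed
    finally show ?thesis .
  qed
  have BvX: "D.Bv (-1) q = embX ` bounding X q" for q
    unfolding D.Bv_def DD_X bounding_def image_image dV_embX by simp
  have ZhN: "D.Zh q (-1) = embN ` cycles (nerve m A) q" for q
  proof -
    have "D.Zh q (-1) = {x \<in> embN ` chains (nerve m A) q. dH m x = 0}" unfolding D.Zh_def DD_N by simp
    also have "\<dots> = embN ` cycles (nerve m A) q"
    proof (intro equalityI subsetI)
      fix x :: "nat set \<times> 'v set \<Rightarrow> 'k" assume "x \<in> {x \<in> embN ` chains (nerve m A) q. dH m x = 0}"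
      then obtain c where c: "c \<in> chains (nerve m A) q" "x = embN c" "dH m x = 0" by blast
      then have "(embN (boundary (nerve m A) c) :: nat set \<times> 'v set \<Rightarrow> 'k) = 0" using dH_embN[OF c(1)] by simp
      then have "boundary (nerve m A) c = 0" by (simp add: embN_0)
      then have "c \<in> cycles (nerve m A) q" using c(1) unfolding cycles_def by (simp add: zero_fun_def)
      then show "x \<in> embN ` cycles (nerve m A) q" using c(2) by blast
    next
      fix x :: "nat set \<times> 'v set \<Rightarrow> 'k" assume "x \<in> embN ` cycles (nerve m A) q"
      then obtain c where c: "c \<in> cycles (nerve m A) q" "x = embN c" by blast
      then have "boundary (nerve m A) c = 0" "c \<in> chains (nerve m A) q"
        unfolding cycles_def by (auto simp: zero_fun_def)
      then show "x \<in> {x \<in> embN ` chains (nerve m A) q. dH m x = 0}" using c(2) dH_embN[of c q] embN_0 by auto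
    qed
    finally show ?thesis .
  qed
  have BhN: "D.Bh q (-1) = embN ` bounding (nerve m A) q" for q
  proof -
    have "D.Bh q (-1) = dH m ` embN ` chains (nerve m A) (q + 1)" unfolding D.Bh_def DD_N by simp
    also have "\<dots> = embN ` bounding (nerve m A) q"
      unfolding bounding_def image_image by (rule image_cong[OF refl]) (simp add: dH_embN)
    finally show ?thesis .
  qed
  have leX: "D.dim (D.Bv (-1) q) \<le> D.dim (D.Zv (-1) q)" for q
    by (rule D.dim_mono_fin[OF _ D.Zv_fin]) (use D.Bv_Zv D.span_superset in blast)
  have leN: "D.dim (D.Bh q (-1)) \<le> D.dim (D.Zh q (-1))" for q
    by (rule D.dim_mono_fin[OF _ D.Zh_fin]) (use D.Bh_Zh D.span_superset in blast)
  have rbX: "reduced_betti TYPE('k) X q = D.dim (D.Zv (-1) q) - D.dim (D.Bv (-1) q)" for q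
    unfolding reduced_betti_def chain_scale_sc ZvX BvX dX ..
  have rbN: "reduced_betti TYPE('k) (nerve m A) q = D.dim (D.Zh q (-1)) - D.dim (D.Bh q (-1))" for q
    unfolding reduced_betti_def chain_scale_sc ZhN BhN dN ..
  show ?thesis unfolding rbX rbN
    using M leX[of "int k"] leX[of "int k + 1"] leN[of "int k"] leN[of "int k + 1"] by linarith
qed

end

theorem theorem1:
  fixes X :: "('v::linorder) set set"
    and A :: "nat \<Rightarrow> 'v set set"
    and m :: nat and k :: nat
  assumes "simplicial_complex X"
    and "\<forall>i<m. subcomplex (A i) X"
    and "(\<Union>i<m. A i) = X"
    and "\<forall>\<sigma>\<in>nerve m A. 1 \<le> card \<sigma> \<and> card \<sigma> \<le> k + 1 \<longrightarrow>
           reduced_betti TYPE('k::field) (inter_family A \<sigma>) (int k - int (card \<sigma>) + 1) = 0"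
  shows "reduced_betti TYPE('k) (nerve m A) (int k + 1) \<le> reduced_betti TYPE('k) X (int k + 1)
         \<and> reduced_betti TYPE('k) X (int k) \<le> reduced_betti TYPE('k) (nerve m A) (int k)"
proof -
  interpret cov X A m using assms(1-3) by (rule cov.intro)
  show ?thesis by (rule final[OF assms(4)])
qed

end
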